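(* Let $K\subseteq L$ be fields, $x=(x_1,\dots,x_n)$, and $H\in L[x]^m$ such that $e_1,\dots,e_s$ are projective image apices of $H$ over $K$. Write $H'=(H_{s+1},\dots,H_m)$. (i) $a\in L^m$ is an image apex of $H$ over $K$ if and only if $(a_{s+1},\dots,a_m)$ is an image apex of $H'$ over $K$. (ii) If $p\in L^m$ has $p_i\ne0$ for some $i>s$, then $p$ is a projective image apex of $H$ over $K$ if and only if $(p_{s+1},\dots,p_m)$ is a projective image apex of $H'$ over $K$. (iii) $\operatorname{trdeg}_K K(H)=\operatorname{trdeg}_K K(H')+s$.
   Context: $e_i$ is the $i$-th standard basis vector. With $y$ a tuple of indeterminates of the appropriate length and $t$ new: $a$ is an image apex of $G$ over $K$ if for all $f\in K[y]$, $f(G)=0\Rightarrow f((1-t)G+ta)=0$; $p$ is a projective image apex of $G$ over $K$ if $p\ne0$ and $f(G)=0\Rightarrow f(G+tp)=0$ for all $f\in K[y]$. $\operatorname{trdeg}_K K(G)$: transcendence degree over $K$ of the field generated by the components of $G$. *)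

theory Defs
  imports Main "HOL-Library.Poly_Mapping"
begin

text \<open>Multivariate polynomials over a field L (the type 'a), in the countably many
 variables indexed by nat, as finitely supported maps from monomials (exponent vectors)
 to coefficients.\<close>

type_synonym 'a mpoly = "(nat \<Rightarrow>\<^sub>0 nat) \<Rightarrow>\<^sub>0 'a"

definition mconst :: "'a::comm_ring_1 \<Rightarrow> 'a mpoly" where
  "mconst c = Poly_Mapping.single 0 c"

definition mvar :: "nat \<Rightarrow> 'a::comm_ring_1 mpoly" where
  "mvar i = Poly_Mapping.single (Poly_Mapping.single i 1) 1"

definition mvars :: "'a::comm_ring_1 mpoly \<Rightarrow> nat set" where
  "mvars f = (\<Union>\<mu>\<in>Poly_Mapping.keys f. Poly_Mapping.keys (\<mu> :: nat \<Rightarrow>\<^sub>0 nat))"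

definition mcoeffs :: "'a::comm_ring_1 mpoly \<Rightarrow> 'a set" where
  "mcoeffs f = Poly_Mapping.lookup f ` Poly_Mapping.keys f"

definition poly_over :: "'a::comm_ring_1 set \<Rightarrow> nat \<Rightarrow> 'a mpoly set" where
  "poly_over K m = {f. mcoeffs f \<subseteq> K \<and> mvars f \<subseteq> {..<m}}"

definition msubst :: "'a::comm_ring_1 mpoly \<Rightarrow> (nat \<Rightarrow> 'a mpoly) \<Rightarrow> 'a mpoly" where
  "msubst f G = (\<Sum>\<mu>\<in>Poly_Mapping.keys f. mconst (Poly_Mapping.lookup f \<mu>) * (\<Prod>i\<in>Poly_Mapping.keys \<mu>. G i ^ Poly_Mapping.lookup \<mu> i))"

definition subfield :: "'a::field set \<Rightarrow> bool" where
  "subfield K \<longleftrightarrow> 0 \<in> K \<and> 1 \<in> K \<and> (\<forall>a\<in>K. \<forall>b\<in>K. a + b \<in> K \<and> a * b \<in> K)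
     \<and> (\<forall>a\<in>K. - a \<in> K) \<and> (\<forall>a\<in>K. a \<noteq> 0 \<longrightarrow> inverse a \<in> K)"

text \<open>G = (G_0,...,G_{m-1}) with G_i \<in> L[x_0,...,x_{n-1}]; the new indeterminate t is x_n.\<close>
definition poly_tuple :: "nat \<Rightarrow> nat \<Rightarrow> (nat \<Rightarrow> 'a::comm_ring_1 mpoly) \<Rightarrow> bool" where
  "poly_tuple n m G \<longleftrightarrow> (\<forall>i<m. mvars (G i) \<subseteq> {..<n})"

definition image_apex ::
  "'a::field set \<Rightarrow> nat \<Rightarrow> nat \<Rightarrow> (nat \<Rightarrow> 'a mpoly) \<Rightarrow> (nat \<Rightarrow> 'a) \<Rightarrow> bool" where
  "image_apex K n m G a \<longleftrightarrow>
     (\<forall>f \<in> poly_over K m. msubst f G = 0 \<longrightarrow>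
        msubst f (\<lambda>i. (1 - mvar n) * G i + mvar n * mconst (a i)) = 0)"

definition proj_image_apex ::
  "'a::field set \<Rightarrow> nat \<Rightarrow> nat \<Rightarrow> (nat \<Rightarrow> 'a mpoly) \<Rightarrow> (nat \<Rightarrow> 'a) \<Rightarrow> bool" where
  "proj_image_apex K n m G p \<longleftrightarrow> (\<exists>i<m. p i \<noteq> 0) \<and>
     (\<forall>f \<in> poly_over K m. msubst f G = 0 \<longrightarrow>
        msubst f (\<lambda>i. G i + mvar n * mconst (p i)) = 0)"

definition gen_alg :: "'a::field set \<Rightarrow> nat \<Rightarrow> (nat \<Rightarrow> 'a mpoly) \<Rightarrow> 'a mpoly set" where
  "gen_alg K m G = {msubst f G | f. f \<in> poly_over K m}"

definition alg_indep :: "'a::field set \<Rightarrow> nat \<Rightarrow> (nat \<Rightarrow> 'a mpoly) \<Rightarrow> bool" where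
  "alg_indep K k u \<longleftrightarrow> (\<forall>f \<in> poly_over K k. msubst f u = 0 \<longrightarrow> f = 0)"

text \<open>trdeg_K K(G): maximal number of elements of K[G] (whose fraction field is K(G))
 that are algebraically independent over K.\<close>
definition trdeg :: "'a::field set \<Rightarrow> nat \<Rightarrow> (nat \<Rightarrow> 'a mpoly) \<Rightarrow> nat" where
  "trdeg K m G = Max {k. \<exists>u. (\<forall>i<k. u i \<in> gen_alg K m G) \<and> alg_indep K k u}"

definition unit_vec :: "nat \<Rightarrow> nat \<Rightarrow> 'a::field" where
  "unit_vec j i = (if i = j then 1 else 0)"

end

theory Submission
  imports Defs "HOL-Library.FuncSet"
begin

definition mprod :: "(nat \<Rightarrow>\<^sub>0 nat) \<Rightarrow> (nat \<Rightarrow> 'a::comm_ring_1 mpoly) \<Rightarrow> 'a mpoly" where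
  "mprod \<mu> G = (\<Prod>i\<in>Poly_Mapping.keys \<mu>. G i ^ Poly_Mapping.lookup \<mu> i)"

lemma mprod_superset:
  assumes "finite V" "Poly_Mapping.keys \<mu> \<subseteq> V"
  shows "mprod \<mu> G = (\<Prod>i\<in>V. G i ^ Poly_Mapping.lookup \<mu> i)"
  unfolding mprod_def
  by (rule prod.mono_neutral_left) (use assms in \<open>auto simp: in_keys_iff\<close>)

lemma mprod_add: "mprod (\<mu> + \<nu>) G = mprod \<mu> G * mprod \<nu> G"
proof -
  let ?V = "Poly_Mapping.keys \<mu> \<union> Poly_Mapping.keys \<nu>"
  have "mprod (\<mu> + \<nu>) G = (\<Prod>i\<in>?V. G i ^ Poly_Mapping.lookup (\<mu>+\<nu>) i)"
    by (rule mprod_superset) (auto simp: keys_add)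
  also have "\<dots> = (\<Prod>i\<in>?V. G i ^ Poly_Mapping.lookup \<mu> i) * (\<Prod>i\<in>?V. G i ^ Poly_Mapping.lookup \<nu> i)"
    by (simp add: lookup_add power_add prod.distrib)
  also have "\<dots> = mprod \<mu> G * mprod \<nu> G"
    by (simp add: mprod_superset[symmetric])
  finally show ?thesis .
qed

lemma mprod_zero [simp]: "mprod 0 G = 1"
  by (simp add: mprod_def)

lemma mprod_single [simp]: "mprod (Poly_Mapping.single i e) G = G i ^ e"
  by (simp add: mprod_def)

lemma mconst_0 [simp]: "mconst 0 = 0" by (simp add: mconst_def)
lemma mconst_1 [simp]: "mconst 1 = 1" by (simp add: mconst_def)
lemma mconst_add: "mconst (a + b) = mconst a + mconst b" by (simp add: mconst_def single_add)
lemma mconst_mult: "mconst (a * b) = mconst a * mconst b" by (simp add: mconst_def mult_single)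
lemma mconst_minus: "mconst (- a) = - mconst a" by (simp add: mconst_def single_uminus)
lemma mconst_diff: "mconst (a - b) = mconst a - mconst b" by (simp add: mconst_def single_diff)
lemma mconst_sum: "mconst (sum f A) = (\<Sum>x\<in>A. mconst (f x))"
  by (induction A rule: infinite_finite_induct) (auto simp: mconst_add)
lemma mconst_prod: "mconst (prod f A) = (\<Prod>x\<in>A. mconst (f x))"
  by (induction A rule: infinite_finite_induct) (auto simp: mconst_mult)
lemma mconst_power: "mconst (a ^ e) = mconst a ^ e"
  by (induction e) (auto simp: mconst_mult)
lemma mconst_eq_iff [simp]: "mconst a = mconst b \<longleftrightarrow> a = b"
  by (metis mconst_def lookup_single_eq)
lemma mconst_eq_0_iff [simp]: "mconst a = 0 \<longleftrightarrow> a = 0"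
  by (metis mconst_0 mconst_eq_iff)

lemma mconst_mult_single: "mconst c * Poly_Mapping.single \<mu> d = Poly_Mapping.single \<mu> (c * d)"
  by (simp add: mconst_def mult_single)

lemma poly_mapping_sum_singles:
  "f = (\<Sum>\<mu>\<in>Poly_Mapping.keys f. Poly_Mapping.single \<mu> (Poly_Mapping.lookup f \<mu>))"
proof (rule poly_mapping_eqI)
  fix k
  show "Poly_Mapping.lookup f k = Poly_Mapping.lookup (\<Sum>\<mu>\<in>Poly_Mapping.keys f. Poly_Mapping.single \<mu> (Poly_Mapping.lookup f \<mu>)) k"
    by (simp add: lookup_sum lookup_single when_def in_keys_iff)
qed

lemma msubst_superset:
  assumes "finite S" "Poly_Mapping.keys f \<subseteq> S"
  shows "msubst f G = (\<Sum>\<mu>\<in>S. mconst (Poly_Mapping.lookup f \<mu>) * mprod \<mu> G)"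
  unfolding msubst_def mprod_def[symmetric]
  by (rule sum.mono_neutral_left) (use assms in \<open>auto simp: in_keys_iff\<close>)

lemma msubst_add: "msubst (f + g) G = msubst f G + msubst g G"
proof -
  let ?S = "Poly_Mapping.keys f \<union> Poly_Mapping.keys g"
  have "msubst (f + g) G = (\<Sum>\<mu>\<in>?S. mconst (Poly_Mapping.lookup (f+g) \<mu>) * mprod \<mu> G)"
    by (rule msubst_superset) (auto simp: keys_add)
  also have "\<dots> = (\<Sum>\<mu>\<in>?S. mconst (Poly_Mapping.lookup f \<mu>) * mprod \<mu> G) + (\<Sum>\<mu>\<in>?S. mconst (Poly_Mapping.lookup g \<mu>) * mprod \<mu> G)"
    by (simp add: lookup_add mconst_add distrib_right sum.distrib)
  also have "\<dots> = msubst f G + msubst g G"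
    by (simp add: msubst_superset[symmetric])
  finally show ?thesis .
qed

lemma msubst_0 [simp]: "msubst 0 G = 0"
  by (simp add: msubst_def)

lemma msubst_single: "msubst (Poly_Mapping.single \<mu> c) G = mconst c * mprod \<mu> G"
  by (cases "c = 0") (auto simp: msubst_def mprod_def)

lemma msubst_sum: "msubst (sum f A) G = (\<Sum>x\<in>A. msubst (f x) G)"
  by (induction A rule: infinite_finite_induct) (auto simp: msubst_add)

lemma msubst_expand: "msubst f G = (\<Sum>\<mu>\<in>Poly_Mapping.keys f. msubst (Poly_Mapping.single \<mu> (Poly_Mapping.lookup f \<mu>)) G)"
  unfolding msubst_single by (simp add: msubst_def mprod_def)

lemma msubst_mult: "msubst (f * g) G = msubst f G * msubst g G"
proof -
  have "f * g = (\<Sum>\<mu>\<in>Poly_Mapping.keys f. \<Sum>\<nu>\<in>Poly_Mapping.keys g.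
      Poly_Mapping.single (\<mu> + \<nu>) (Poly_Mapping.lookup f \<mu> * Poly_Mapping.lookup g \<nu>))"
  proof -
    have "f * g = (\<Sum>\<mu>\<in>Poly_Mapping.keys f. Poly_Mapping.single \<mu> (Poly_Mapping.lookup f \<mu>))
        * (\<Sum>\<nu>\<in>Poly_Mapping.keys g. Poly_Mapping.single \<nu> (Poly_Mapping.lookup g \<nu>))"
      by (simp only: poly_mapping_sum_singles[symmetric])
    then show ?thesis by (simp add: sum_product mult_single)
  qed
  then have "msubst (f * g) G = (\<Sum>\<mu>\<in>Poly_Mapping.keys f. \<Sum>\<nu>\<in>Poly_Mapping.keys g.
      mconst (Poly_Mapping.lookup f \<mu>) * mprod \<mu> G * (mconst (Poly_Mapping.lookup g \<nu>) * mprod \<nu> G))"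
    by (simp add: msubst_sum msubst_single mprod_add mconst_mult mult_ac)
  also have "\<dots> = msubst f G * msubst g G"
    by (simp add: msubst_def mprod_def sum_product)
  finally show ?thesis .
qed

lemma msubst_mconst [simp]: "msubst (mconst c) G = mconst c"
  by (simp add: mconst_def msubst_single)

lemma msubst_1 [simp]: "msubst 1 G = 1"
  using msubst_mconst[of 1 G] by simp

lemma msubst_mvar [simp]: "msubst (mvar i) G = G i"
  by (simp add: mvar_def msubst_single)

lemma msubst_prod: "msubst (prod f A) G = (\<Prod>x\<in>A. msubst (f x) G)"
  by (induction A rule: infinite_finite_induct) (auto simp: msubst_mult)

lemma msubst_power: "msubst (f ^ e) G = msubst f G ^ e"
  by (induction e) (auto simp: msubst_mult)

lemma msubst_minus: "msubst (- f) G = - msubst f G"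
proof -
  have "msubst (- f) G + msubst f G = 0"
    using msubst_add[of "- f" f G] by simp
  then show ?thesis by (simp add: eq_neg_iff_add_eq_0)
qed

lemma msubst_diff: "msubst (f - g) G = msubst f G - msubst g G"
  using msubst_add[of f "- g" G] by (simp add: msubst_minus)

lemma msubst_compose: "msubst (msubst f G) F = msubst f (\<lambda>i. msubst (G i) F)"
  unfolding msubst_def[of f G] by (simp add: msubst_def[of f] msubst_sum msubst_mult msubst_prod msubst_power)

lemma mvar_power: "mvar i ^ e = Poly_Mapping.single (Poly_Mapping.single i e) 1"
  by (induction e) (auto simp: mvar_def mult_single single_add[symmetric] add.commute)

lemma prod_single_one:
  "(\<Prod>i\<in>A. Poly_Mapping.single (\<nu> i) (1::'a::comm_semiring_1)) = Poly_Mapping.single (\<Sum>i\<in>A. \<nu> i) 1"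
  by (induction A rule: infinite_finite_induct) (auto simp: mult_single)

lemma sum_single_keys: "(\<Sum>i\<in>Poly_Mapping.keys \<mu>. Poly_Mapping.single i (Poly_Mapping.lookup \<mu> i)) = \<mu>"
  using poly_mapping_sum_singles[of \<mu>] by simp

lemma mprod_mvar: "mprod \<mu> mvar = Poly_Mapping.single \<mu> 1"
  by (simp add: mprod_def mvar_power prod_single_one sum_single_keys)

lemma msubst_mvar_id [simp]: "msubst f mvar = f"
proof -
  have "msubst f mvar = (\<Sum>\<mu>\<in>Poly_Mapping.keys f. Poly_Mapping.single \<mu> (Poly_Mapping.lookup f \<mu>))"
    unfolding msubst_def mprod_def[symmetric] by (simp add: mprod_mvar mconst_mult_single)
  then show ?thesis using poly_mapping_sum_singles[of f] by simp
qed

lemma single_as_mprod: "Poly_Mapping.single \<mu> c = mconst c * mprod \<mu> mvar"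
  by (simp add: mprod_mvar mconst_mult_single)

lemma msubst_cong:
  assumes "\<And>i. i \<in> mvars f \<Longrightarrow> G i = G' i"
  shows "msubst f G = msubst f G'"
  unfolding msubst_def
  by (rule sum.cong[OF refl], rule arg_cong[where f="\<lambda>x. _ * x"], rule prod.cong[OF refl])
     (use assms in \<open>fastforce simp: mvars_def\<close>)

lemma finite_mvars [simp]: "finite (mvars f)"
  by (simp add: mvars_def)

lemma mvars_single: "mvars (Poly_Mapping.single \<mu> c) \<subseteq> Poly_Mapping.keys \<mu>"
  by (simp add: mvars_def)

lemma mvars_add: "mvars (f + g) \<subseteq> mvars f \<union> mvars g"
  unfolding mvars_def using keys_add[of f g] by auto

lemma mvars_mult: "mvars (f * g) \<subseteq> mvars f \<union> mvars g"
proof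
  fix i assume "i \<in> mvars (f * g)"
  then obtain \<mu> where "\<mu> \<in> Poly_Mapping.keys (f * g)" "i \<in> Poly_Mapping.keys \<mu>"
    by (auto simp: mvars_def)
  then obtain a b where "\<mu> = a + b" "a \<in> Poly_Mapping.keys f" "b \<in> Poly_Mapping.keys g"
    using keys_mult[of f g] by auto
  with \<open>i \<in> Poly_Mapping.keys \<mu>\<close> show "i \<in> mvars f \<union> mvars g"
    using keys_add[of a b] by (auto simp: mvars_def)
qed

lemma mvars_0 [simp]: "mvars 0 = {}" by (simp add: mvars_def)
lemma mvars_mconst [simp]: "mvars (mconst c) = {}"
  using mvars_single[of 0 c] by (simp add: mconst_def)
lemma mvars_1 [simp]: "mvars 1 = {}"
  using mvars_mconst[of 1] by simp
lemma mvars_mvar: "mvars (mvar i) \<subseteq> {i}"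
  using mvars_single[of "Poly_Mapping.single i 1" 1] by (simp add: mvar_def)

lemma mvars_sum: "mvars (sum f A) \<subseteq> (\<Union>x\<in>A. mvars (f x))"
  by (induction A rule: infinite_finite_induct) (use mvars_add in auto)
lemma mvars_prod: "mvars (prod f A) \<subseteq> (\<Union>x\<in>A. mvars (f x))"
  by (induction A rule: infinite_finite_induct) (use mvars_mult in auto)
lemma mvars_power: "mvars (f ^ e) \<subseteq> mvars f"
  by (induction e) (use mvars_mult in auto)
lemma mvars_minus [simp]: "mvars (- f) = mvars f"
  by (simp add: mvars_def keys_minus)
lemma mvars_diff: "mvars (f - g) \<subseteq> mvars f \<union> mvars g"
  using mvars_add[of f "- g"] by simp

lemma mvars_msubst: "mvars (msubst f G) \<subseteq> (\<Union>i\<in>mvars f. mvars (G i))"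
proof -
  have "mvars (msubst f G) \<subseteq> (\<Union>\<mu>\<in>Poly_Mapping.keys f. mvars (mconst (Poly_Mapping.lookup f \<mu>) * mprod \<mu> G))"
    unfolding msubst_def mprod_def[symmetric] by (rule mvars_sum)
  also have "\<dots> \<subseteq> (\<Union>\<mu>\<in>Poly_Mapping.keys f. mvars (mprod \<mu> G))"
    using mvars_mult by fastforce
  also have "\<dots> \<subseteq> (\<Union>\<mu>\<in>Poly_Mapping.keys f. \<Union>i\<in>Poly_Mapping.keys \<mu>. mvars (G i))"
    unfolding mprod_def using mvars_prod mvars_power by fastforce
  finally show ?thesis by (auto simp: mvars_def)
qed

definition inK :: "'a::field set \<Rightarrow> 'a mpoly \<Rightarrow> bool" where
  "inK K f \<longleftrightarrow> (\<forall>\<mu>. Poly_Mapping.lookup f \<mu> \<in> K)"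

lemma subfield_0: "subfield K \<Longrightarrow> 0 \<in> K" by (simp add: subfield_def)
lemma subfield_1: "subfield K \<Longrightarrow> 1 \<in> K" by (simp add: subfield_def)
lemma subfield_add: "subfield K \<Longrightarrow> a \<in> K \<Longrightarrow> b \<in> K \<Longrightarrow> a + b \<in> K" by (simp add: subfield_def)
lemma subfield_mult: "subfield K \<Longrightarrow> a \<in> K \<Longrightarrow> b \<in> K \<Longrightarrow> a * b \<in> K" by (simp add: subfield_def)
lemma subfield_uminus: "subfield K \<Longrightarrow> a \<in> K \<Longrightarrow> - a \<in> K" by (simp add: subfield_def)
lemma subfield_diff: "subfield K \<Longrightarrow> a \<in> K \<Longrightarrow> b \<in> K \<Longrightarrow> a - b \<in> K"
  by (metis diff_conv_add_uminus subfield_add subfield_uminus)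
lemma subfield_inverse: "subfield K \<Longrightarrow> a \<in> K \<Longrightarrow> inverse a \<in> K"
  by (cases "a = 0") (auto simp: subfield_def)
lemma subfield_divide: "subfield K \<Longrightarrow> a \<in> K \<Longrightarrow> b \<in> K \<Longrightarrow> a / b \<in> K"
  by (simp add: divide_inverse subfield_mult subfield_inverse)
lemma subfield_sum: "subfield K \<Longrightarrow> (\<And>x. x \<in> A \<Longrightarrow> f x \<in> K) \<Longrightarrow> sum f A \<in> K"
  by (induction A rule: infinite_finite_induct) (auto simp: subfield_0 subfield_add)
lemma subfield_prod: "subfield K \<Longrightarrow> (\<And>x. x \<in> A \<Longrightarrow> f x \<in> K) \<Longrightarrow> prod f A \<in> K"
  by (induction A rule: infinite_finite_induct) (auto simp: subfield_1 subfield_mult)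

lemma poly_over_iff: "subfield K \<Longrightarrow> f \<in> poly_over K m \<longleftrightarrow> inK K f \<and> mvars f \<subseteq> {..<m}"
proof -
  assume K: "subfield K"
  have "mcoeffs f \<subseteq> K \<longleftrightarrow> inK K f"
  proof
    assume "mcoeffs f \<subseteq> K"
    then show "inK K f" unfolding inK_def mcoeffs_def
      by (metis K image_eqI in_keys_iff subfield_0 subsetD)
  next
    assume "inK K f"
    then show "mcoeffs f \<subseteq> K" unfolding inK_def mcoeffs_def by blast
  qed
  then show ?thesis by (simp add: poly_over_def)
qed

lemma inK_single: "subfield K \<Longrightarrow> c \<in> K \<Longrightarrow> inK K (Poly_Mapping.single \<mu> c)"
  by (simp add: inK_def lookup_single when_def subfield_0)
lemma inK_add: "subfield K \<Longrightarrow> inK K f \<Longrightarrow> inK K g \<Longrightarrow> inK K (f + g)"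
  by (simp add: inK_def lookup_add subfield_add)
lemma inK_0: "subfield K \<Longrightarrow> inK K 0"
  by (simp add: inK_def subfield_0)
lemma inK_sum: "subfield K \<Longrightarrow> (\<And>x. x \<in> A \<Longrightarrow> inK K (f x)) \<Longrightarrow> inK K (sum f A)"
  by (induction A rule: infinite_finite_induct) (auto simp: inK_0 inK_add)
lemma inK_mult: "subfield K \<Longrightarrow> inK K f \<Longrightarrow> inK K g \<Longrightarrow> inK K (f * g)"
proof -
  assume K: "subfield K" and f: "inK K f" and g: "inK K g"
  have "f * g = (\<Sum>\<mu>\<in>Poly_Mapping.keys f. \<Sum>\<nu>\<in>Poly_Mapping.keys g.
      Poly_Mapping.single (\<mu> + \<nu>) (Poly_Mapping.lookup f \<mu> * Poly_Mapping.lookup g \<nu>))"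
  proof -
    have "f * g = (\<Sum>\<mu>\<in>Poly_Mapping.keys f. Poly_Mapping.single \<mu> (Poly_Mapping.lookup f \<mu>))
        * (\<Sum>\<nu>\<in>Poly_Mapping.keys g. Poly_Mapping.single \<nu> (Poly_Mapping.lookup g \<nu>))"
      by (simp only: poly_mapping_sum_singles[symmetric])
    then show ?thesis by (simp add: sum_product mult_single)
  qed
  also have "inK K \<dots>"
    by (intro inK_sum inK_single subfield_mult K) (use f g in \<open>auto simp: inK_def\<close>)
  finally show ?thesis .
qed
lemma inK_mconst: "subfield K \<Longrightarrow> c \<in> K \<Longrightarrow> inK K (mconst c)"
  by (simp add: mconst_def inK_single)
lemma inK_mvar: "subfield K \<Longrightarrow> inK K (mvar i)"
  by (simp add: mvar_def inK_single subfield_1)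
lemma inK_1: "subfield K \<Longrightarrow> inK K 1"
  using inK_mconst[of K 1] by (simp add: subfield_1)
lemma inK_prod: "subfield K \<Longrightarrow> (\<And>x. x \<in> A \<Longrightarrow> inK K (f x)) \<Longrightarrow> inK K (prod f A)"
  by (induction A rule: infinite_finite_induct) (auto simp: inK_1 inK_mult)
lemma inK_power: "subfield K \<Longrightarrow> inK K f \<Longrightarrow> inK K (f ^ e)"
  by (induction e) (auto simp: inK_1 inK_mult)
lemma inK_uminus: "subfield K \<Longrightarrow> inK K f \<Longrightarrow> inK K (- f)"
  by (simp add: inK_def subfield_uminus)
lemma inK_diff: "subfield K \<Longrightarrow> inK K f \<Longrightarrow> inK K g \<Longrightarrow> inK K (f - g)"
  by (simp add: inK_def lookup_minus subfield_diff)

lemma inK_msubst: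
  assumes K: "subfield K" and f: "inK K f" and G: "\<And>i. i \<in> mvars f \<Longrightarrow> inK K (G i)"
  shows "inK K (msubst f G)"
  unfolding msubst_def
  by (intro inK_sum inK_mult inK_mconst inK_prod inK_power K)
     (use f G in \<open>auto simp: inK_def mvars_def\<close>)

lemma poly_induct [consumes 3, case_names const var add mult]:
  assumes K: "subfield K" and f: "inK K f" and V: "mvars f \<subseteq> V"
    and const: "\<And>c. c \<in> K \<Longrightarrow> P (mconst c)"
    and var: "\<And>i. i \<in> V \<Longrightarrow> P (mvar i)"
    and add: "\<And>p q. P p \<Longrightarrow> P q \<Longrightarrow> P (p + q)"
    and mult: "\<And>p q. P p \<Longrightarrow> P q \<Longrightarrow> P (p * q)"
  shows "P f"
proof -
  have P0: "P 0" using const[of 0] subfield_0[OF K] by simp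
  have P1: "P 1" using const[of 1] subfield_1[OF K] by simp
  have Psum: "P (sum g A)" if "\<And>x. x \<in> A \<Longrightarrow> P (g x)" for g and A :: "'b set"
    using that by (induction A rule: infinite_finite_induct) (auto simp: P0 add)
  have Pprod: "P (prod g A)" if "\<And>x. x \<in> A \<Longrightarrow> P (g x)" for g and A :: "'b set"
    using that by (induction A rule: infinite_finite_induct) (auto simp: P1 mult)
  have Ppow: "P (g ^ e)" if "P g" for g e
    using that by (induction e) (auto simp: P1 mult)
  have "P (\<Sum>\<mu>\<in>Poly_Mapping.keys f. mconst (Poly_Mapping.lookup f \<mu>) * mprod \<mu> mvar)"
    using f V unfolding mprod_def
    by (intro Psum mult const Pprod Ppow var) (auto simp: inK_def mvars_def)
  then show ?thesis
    using msubst_mvar_id[of f] by (simp add: msubst_def mprod_def)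
qed



lemma mvar_pow_mult_expand:
  "mvar N ^ e * q = (\<Sum>\<mu>\<in>Poly_Mapping.keys q. Poly_Mapping.single (Poly_Mapping.single N e + \<mu>) (Poly_Mapping.lookup q \<mu>))"
proof -
  have "mvar N ^ e * q = Poly_Mapping.single (Poly_Mapping.single N e) 1 * (\<Sum>\<mu>\<in>Poly_Mapping.keys q. Poly_Mapping.single \<mu> (Poly_Mapping.lookup q \<mu>))"
    by (simp only: mvar_power poly_mapping_sum_singles[symmetric])
  then show ?thesis by (simp add: sum_distrib_left mult_single)
qed

lemma lookup_mvar_pow_mult:
  assumes "N \<notin> mvars q"
  shows "Poly_Mapping.lookup (mvar N ^ e * q) \<nu> =
    (if Poly_Mapping.lookup \<nu> N = e then Poly_Mapping.lookup q (Poly_Mapping.update N 0 \<nu>) else 0)"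
proof -
  have key: "(Poly_Mapping.single N e + \<mu> = \<nu>) \<longleftrightarrow> (Poly_Mapping.lookup \<nu> N = e \<and> \<mu> = Poly_Mapping.update N 0 \<nu>)"
    if "\<mu> \<in> Poly_Mapping.keys q" for \<mu>
  proof -
    have \<mu>N: "Poly_Mapping.lookup \<mu> N = 0"
      using that assms by (auto simp: mvars_def in_keys_iff)
    show ?thesis
    proof
      assume h: "Poly_Mapping.single N e + \<mu> = \<nu>"
      then have "Poly_Mapping.lookup \<nu> N = e" using \<mu>N by (auto simp: lookup_add)
      moreover have "\<mu> = Poly_Mapping.update N 0 \<nu>"
        by (rule poly_mapping_eqI) (use h \<mu>N in \<open>auto simp: lookup_update lookup_add lookup_single\<close>)
      ultimately show "Poly_Mapping.lookup \<nu> N = e \<and> \<mu> = Poly_Mapping.update N 0 \<nu>" by simp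
    next
      assume h: "Poly_Mapping.lookup \<nu> N = e \<and> \<mu> = Poly_Mapping.update N 0 \<nu>"
      show "Poly_Mapping.single N e + \<mu> = \<nu>"
        by (rule poly_mapping_eqI) (use h in \<open>auto simp: lookup_update lookup_add lookup_single when_def\<close>)
    qed
  qed
  have "Poly_Mapping.lookup (mvar N ^ e * q) \<nu> =
      (\<Sum>\<mu>\<in>Poly_Mapping.keys q. (Poly_Mapping.lookup q \<mu> when Poly_Mapping.single N e + \<mu> = \<nu>))"
    by (simp add: mvar_pow_mult_expand lookup_sum lookup_single)
  also have "\<dots> = (\<Sum>\<mu>\<in>Poly_Mapping.keys q. (Poly_Mapping.lookup q \<mu> when
        (Poly_Mapping.lookup \<nu> N = e \<and> \<mu> = Poly_Mapping.update N 0 \<nu>)))"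
    by (rule sum.cong[OF refl]) (simp add: key)
  also have "\<dots> = (if Poly_Mapping.lookup \<nu> N = e then Poly_Mapping.lookup q (Poly_Mapping.update N 0 \<nu>) else 0)"
    by (auto simp: when_def in_keys_iff)
  finally show ?thesis .
qed

lemma extract_coeffs:
  assumes "finite E" "\<And>e. e \<in> E \<Longrightarrow> N \<notin> mvars (q e)"
    and "(\<Sum>e\<in>E. mvar N ^ e * q e) = 0" and "e0 \<in> E"
  shows "q e0 = 0"
proof (rule poly_mapping_eqI)
  fix \<mu>
  show "Poly_Mapping.lookup (q e0) \<mu> = Poly_Mapping.lookup 0 \<mu>"
  proof (cases "Poly_Mapping.lookup \<mu> N = 0")
    case False
    then have "\<mu> \<notin> Poly_Mapping.keys (q e0)"
      using False assms(2)[OF assms(4)] unfolding mvars_def by (metis UN_I in_keys_iff)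
    then show ?thesis by (simp add: in_keys_iff)
  next
    case True
    define \<nu> where "\<nu> = \<mu> + Poly_Mapping.single N e0"
    have \<nu>N: "Poly_Mapping.lookup \<nu> N = e0" using True by (simp add: \<nu>_def lookup_add)
    have \<nu>u: "Poly_Mapping.update N 0 \<nu> = \<mu>"
      by (rule poly_mapping_eqI) (use True in \<open>auto simp: \<nu>_def lookup_update lookup_add lookup_single when_def\<close>)
    have "0 = Poly_Mapping.lookup (\<Sum>e\<in>E. mvar N ^ e * q e) \<nu>" using assms(3) by simp
    also have "\<dots> = (\<Sum>e\<in>E. (if e0 = e then Poly_Mapping.lookup (q e) \<mu> else 0))"
      unfolding lookup_sum by (rule sum.cong[OF refl]) (simp add: lookup_mvar_pow_mult assms(2) \<nu>N \<nu>u)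
    also have "\<dots> = Poly_Mapping.lookup (q e0) \<mu>"
      using assms(1,4) by simp
    finally show ?thesis by simp
  qed
qed

lemma single_split_var:
  "Poly_Mapping.single \<mu> c = mvar j ^ Poly_Mapping.lookup \<mu> j * Poly_Mapping.single (Poly_Mapping.update j 0 \<mu>) c"
proof -
  have "Poly_Mapping.single j (Poly_Mapping.lookup \<mu> j) + Poly_Mapping.update j 0 \<mu> = \<mu>"
    by (rule poly_mapping_eqI) (auto simp: lookup_update lookup_add lookup_single when_def)
  then show ?thesis by (simp add: mvar_power mult_single)
qed

lemma decomp_var:
  fixes f :: "'a::field mpoly"
  obtains E fe where "finite E" "f = (\<Sum>e\<in>E. mvar j ^ e * fe e)"
    "\<And>e. j \<notin> mvars (fe e)" "\<And>e. mvars (fe e) \<subseteq> mvars f"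
    "\<And>K e. subfield K \<Longrightarrow> inK K f \<Longrightarrow> inK K (fe e)"
proof -
  define E where "E = (\<lambda>\<mu>. Poly_Mapping.lookup \<mu> j) ` Poly_Mapping.keys f"
  define fe where "fe e = (\<Sum>\<mu>\<in>{\<mu>\<in>Poly_Mapping.keys f. Poly_Mapping.lookup \<mu> j = e}.
      Poly_Mapping.single (Poly_Mapping.update j 0 \<mu>) (Poly_Mapping.lookup f \<mu>))" for e
  have "finite E" by (simp add: E_def)
  moreover have "f = (\<Sum>e\<in>E. mvar j ^ e * fe e)"
  proof -
    have "f = (\<Sum>\<mu>\<in>Poly_Mapping.keys f. mvar j ^ Poly_Mapping.lookup \<mu> j *
        Poly_Mapping.single (Poly_Mapping.update j 0 \<mu>) (Poly_Mapping.lookup f \<mu>))"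
      by (subst poly_mapping_sum_singles) (simp add: single_split_var[symmetric])
    also have "\<dots> = (\<Sum>e\<in>E. \<Sum>\<mu>\<in>{\<mu>\<in>Poly_Mapping.keys f. Poly_Mapping.lookup \<mu> j = e}. mvar j ^ Poly_Mapping.lookup \<mu> j *
        Poly_Mapping.single (Poly_Mapping.update j 0 \<mu>) (Poly_Mapping.lookup f \<mu>))"
      by (rule sum.group[symmetric]) (auto simp: E_def)
    also have "\<dots> = (\<Sum>e\<in>E. mvar j ^ e * fe e)"
      by (rule sum.cong[OF refl]) (simp add: fe_def sum_distrib_left)
    finally show ?thesis .
  qed
  moreover have "j \<notin> mvars (fe e)" "mvars (fe e) \<subseteq> mvars f" for e
  proof -
    have "mvars (fe e) \<subseteq> (\<Union>\<mu>\<in>{\<mu>\<in>Poly_Mapping.keys f. Poly_Mapping.lookup \<mu> j = e}. mvars (Poly_Mapping.single (Poly_Mapping.update j 0 \<mu>) (Poly_Mapping.lookup f \<mu>)))"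
      unfolding fe_def by (rule mvars_sum)
    also have "\<dots> \<subseteq> (\<Union>\<mu>\<in>Poly_Mapping.keys f. Poly_Mapping.keys \<mu> - {j})"
      using mvars_single by (fastforce simp: keys_update)
    finally have *: "mvars (fe e) \<subseteq> (\<Union>\<mu>\<in>Poly_Mapping.keys f. Poly_Mapping.keys \<mu> - {j})" .
    then show "j \<notin> mvars (fe e)" by blast
    show "mvars (fe e) \<subseteq> mvars f" using * by (auto simp: mvars_def)
  qed
  moreover have "inK K (fe e)" if "subfield K" "inK K f" for K e
    unfolding fe_def by (intro inK_sum inK_single that(1)) (use that in \<open>auto simp: inK_def\<close>)
  ultimately show ?thesis using that by blast
qed

lemma msubst_decomp:
  "f = (\<Sum>e\<in>E. mvar j ^ e * fe e) \<Longrightarrow> msubst f G = (\<Sum>e\<in>E. G j ^ e * msubst (fe e) G)"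
  by (simp add: msubst_sum msubst_mult msubst_power)

definition upd :: "nat set \<Rightarrow> (nat \<Rightarrow> 'b) \<Rightarrow> (nat \<Rightarrow> 'b) \<Rightarrow> nat \<Rightarrow> 'b" where
  "upd V T A = (\<lambda>i. if i \<in> V then T i else A i)"

lemma upd_empty [simp]: "upd {} T A = A"
  by (simp add: upd_def)

lemma fresh_var: "finite (S :: nat set) \<Longrightarrow> \<exists>N. N \<notin> S"
  using ex_new_if_finite infinite_UNIV_nat by blast

lemma split_step:
  fixes f :: "'a::field mpoly"
  assumes E: "finite E" and dec: "f = (\<Sum>e\<in>E. mvar v ^ e * fe e)"
    and nv: "\<And>e. v \<notin> mvars (fe e)" and sub: "\<And>e. mvars (fe e) \<subseteq> mvars f"
    and vanish: "\<And>T. msubst f (upd V T A) = 0" and e: "e \<in> E" and vV: "v \<in> V"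
  shows "msubst (fe e) (upd (V - {v}) T A) = 0"
proof -
  let ?S = "\<Union>i\<in>mvars f. mvars (A i) \<union> mvars (T i)"
  obtain N where N: "N \<notin> ?S" using fresh_var[of ?S] by auto
  define T' where "T' = T(v := mvar N)"
  have eq: "msubst (fe e') (upd V T' A) = msubst (fe e') (upd (V - {v}) T A)" for e'
    by (rule msubst_cong) (use nv in \<open>auto simp: upd_def T'_def\<close>)
  have "0 = msubst f (upd V T' A)" using vanish by simp
  also have "\<dots> = (\<Sum>e\<in>E. (upd V T' A v) ^ e * msubst (fe e) (upd V T' A))"
    by (rule msubst_decomp[OF dec])
  also have "\<dots> = (\<Sum>e\<in>E. mvar N ^ e * msubst (fe e) (upd (V - {v}) T A))"
  proof -
    have "upd V T' A v = mvar N" using vV by (simp add: upd_def T'_def)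
    then show ?thesis by (simp add: eq)
  qed
  finally have "(\<Sum>e\<in>E. mvar N ^ e * msubst (fe e) (upd (V - {v}) T A)) = 0" by simp
  moreover have "N \<notin> mvars (msubst (fe e') (upd (V - {v}) T A))" for e'
  proof
    assume "N \<in> mvars (msubst (fe e') (upd (V - {v}) T A))"
    then obtain i where "i \<in> mvars (fe e')" "N \<in> mvars (upd (V - {v}) T A i)"
      using mvars_msubst by blast
    then show False using N sub[of e'] by (auto simp: upd_def split: if_splits)
  qed
  ultimately show ?thesis using extract_coeffs[OF E, of N "\<lambda>e. msubst (fe e) (upd (V - {v}) T A)"] e by blast
qed



lemma apex_subst:
  assumes K: "subfield K" and Ht: "\<forall>i<m. mvars (H i) \<subseteq> {..<n}"
    and ap: "proj_image_apex K n m H (unit_vec j)"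
    and f: "inK K f" "mvars f \<subseteq> {..<m}" "msubst f H = 0"
  shows "msubst f (upd {j} (\<lambda>_. mvar n) H) = 0"
proof -
  have "f \<in> poly_over K m" using f K poly_over_iff by blast
  then have h: "msubst f (\<lambda>i. H i + mvar n * mconst (unit_vec j i)) = 0"
    using ap f(3) unfolding proj_image_apex_def by blast
  define \<sigma> where "\<sigma> = (\<lambda>i. if i = n then mvar n - H j else mvar i)"
  have "0 = msubst (msubst f (\<lambda>i. H i + mvar n * mconst (unit_vec j i))) \<sigma>" using h by simp
  also have "\<dots> = msubst f (\<lambda>i. msubst (H i + mvar n * mconst (unit_vec j i)) \<sigma>)"
    by (rule msubst_compose)
  also have "\<dots> = msubst f (upd {j} (\<lambda>_. mvar n) H)"
  proof (rule msubst_cong)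
    fix i assume i: "i \<in> mvars f"
    then have "i < m" using f(2) by auto
    have "msubst (H i) \<sigma> = msubst (H i) mvar"
      by (rule msubst_cong) (use Ht \<open>i<m\<close> in \<open>auto simp: \<sigma>_def\<close>)
    then have Hi: "msubst (H i) \<sigma> = H i" by simp
    have \<sigma>n: "\<sigma> n = mvar n - H j" by (simp add: \<sigma>_def)
    show "msubst (H i + mvar n * mconst (unit_vec j i)) \<sigma> = upd {j} (\<lambda>_. mvar n) H i"
      using Hi by (cases "i = j") (simp_all add: msubst_add msubst_mult \<sigma>n upd_def unit_vec_def)
  qed
  finally show ?thesis by simp
qed

lemma rel_free:
  assumes K: "subfield K" and Ht: "\<forall>i<m. mvars (H i) \<subseteq> {..<n}"
    and ap: "\<forall>j<s. proj_image_apex K n m H (unit_vec j)"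
  shows "finite V \<Longrightarrow> V \<subseteq> {..<s} \<Longrightarrow> inK K f \<Longrightarrow> mvars f \<subseteq> {..<m} \<Longrightarrow> msubst f H = 0
    \<Longrightarrow> msubst f (upd V T H) = 0"
proof (induction V arbitrary: f T rule: finite_induct)
  case empty then show ?case by simp
next
  case (insert v V)
  obtain E fe where E: "finite E" and dec: "f = (\<Sum>e\<in>E. mvar v ^ e * fe e)"
    and nv: "\<And>e. v \<notin> mvars (fe e)" and sub: "\<And>e. mvars (fe e) \<subseteq> mvars f"
    and inKfe: "\<And>K e. subfield K \<Longrightarrow> inK K f \<Longrightarrow> inK K (fe e)"
    by (rule decomp_var[of f v]) blast
  have v: "v < s" using insert by auto
  have "0 = msubst f (upd {v} (\<lambda>_. mvar n) H)"
    using apex_subst[OF K Ht] ap v insert.prems by auto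
  also have "\<dots> = (\<Sum>e\<in>E. mvar n ^ e * msubst (fe e) H)"
  proof -
    have eq: "msubst (fe e) (upd {v} (\<lambda>_. mvar n) H) = msubst (fe e) H" for e
      by (rule msubst_cong) (use nv in \<open>auto simp: upd_def\<close>)
    have uv: "upd {v} (\<lambda>_. mvar n) H v = mvar n" by (simp add: upd_def)
    show ?thesis by (simp add: msubst_decomp[OF dec] eq uv)
  qed
  finally have z: "(\<Sum>e\<in>E. mvar n ^ e * msubst (fe e) H) = 0" by simp
  have nn: "n \<notin> mvars (msubst (fe e) H)" for e
  proof
    assume "n \<in> mvars (msubst (fe e) H)"
    then obtain i where "i \<in> mvars (fe e)" "n \<in> mvars (H i)" using mvars_msubst by blast
    then show False using sub[of e] insert.prems Ht by fastforce
  qed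
  have fe0: "msubst (fe e) H = 0" if "e \<in> E" for e
    using extract_coeffs[OF E, of n "\<lambda>e. msubst (fe e) H"] nn z that by blast
  have IH: "msubst (fe e) (upd V T H) = 0" if "e \<in> E" for e
    using insert.IH[of "fe e" T] insert.prems inKfe[OF K] sub[of e] fe0[OF that] by auto
  have eq2: "msubst (fe e) (upd (insert v V) T H) = msubst (fe e) (upd V T H)" for e
    by (rule msubst_cong) (use nv in \<open>auto simp: upd_def\<close>)
  have uv2: "upd (insert v V) T H v = T v" by (simp add: upd_def)
  have "msubst f (upd (insert v V) T H) = (\<Sum>e\<in>E. T v ^ e * msubst (fe e) (upd V T H))"
    by (simp add: msubst_decomp[OF dec] eq2 uv2)
  also have "\<dots> = 0" using IH by simp
  finally show ?case .
qed

lemma rel_transfer: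
  assumes K: "subfield K"
    and base: "\<And>g. inK K g \<Longrightarrow> mvars g \<subseteq> W \<Longrightarrow> msubst g A = 0 \<Longrightarrow> msubst g B = 0"
  shows "finite V \<Longrightarrow> inK K f \<Longrightarrow> mvars f \<subseteq> V \<union> W \<Longrightarrow> (\<And>T. msubst f (upd V T A) = 0)
    \<Longrightarrow> msubst f (upd V T B) = 0"
proof (induction V arbitrary: f T rule: finite_induct)
  case empty then show ?case using base by simp
next
  case (insert v V)
  obtain E fe where E: "finite E" and dec: "f = (\<Sum>e\<in>E. mvar v ^ e * fe e)"
    and nv: "\<And>e. v \<notin> mvars (fe e)" and sub: "\<And>e. mvars (fe e) \<subseteq> mvars f"
    and inKfe: "\<And>K e. subfield K \<Longrightarrow> inK K f \<Longrightarrow> inK K (fe e)"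
    by (rule decomp_var[of f v]) blast
  have vanish: "msubst (fe e) (upd V T' A) = 0" if "e \<in> E" for e T'
    using split_step[OF E dec nv sub insert.prems(3) that, of T'] insert.hyps(2) by simp
  have IH: "msubst (fe e) (upd V T B) = 0" if "e \<in> E" for e
  proof (rule insert.IH)
    show "inK K (fe e)" using inKfe[OF K insert.prems(1)] .
    show "mvars (fe e) \<subseteq> V \<union> W" using sub[of e] nv[of e] insert.prems(2) by auto
    show "msubst (fe e) (upd V T' A) = 0" for T' using vanish[OF that] .
  qed
  have eq2: "msubst (fe e) (upd (insert v V) T B) = msubst (fe e) (upd V T B)" for e
    by (rule msubst_cong) (use nv in \<open>auto simp: upd_def\<close>)
  have uv2: "upd (insert v V) T B v = T v" by (simp add: upd_def)
  have "msubst f (upd (insert v V) T B) = (\<Sum>e\<in>E. T v ^ e * msubst (fe e) (upd V T B))"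
    by (simp add: msubst_decomp[OF dec] eq2 uv2)
  also have "\<dots> = 0" using IH by simp
  finally show ?case .
qed

lemma indep_extend:
  assumes K: "subfield K"
    and base: "\<And>g. inK K g \<Longrightarrow> mvars g \<subseteq> W \<Longrightarrow> msubst g A = 0 \<Longrightarrow> g = 0"
  shows "finite V \<Longrightarrow> inK K f \<Longrightarrow> mvars f \<subseteq> V \<union> W \<Longrightarrow> (\<And>T. msubst f (upd V T A) = 0)
    \<Longrightarrow> f = 0"
proof (induction V arbitrary: f rule: finite_induct)
  case empty then show ?case using base by simp
next
  case (insert v V)
  obtain E fe where E: "finite E" and dec: "f = (\<Sum>e\<in>E. mvar v ^ e * fe e)"
    and nv: "\<And>e. v \<notin> mvars (fe e)" and sub: "\<And>e. mvars (fe e) \<subseteq> mvars f"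
    and inKfe: "\<And>K e. subfield K \<Longrightarrow> inK K f \<Longrightarrow> inK K (fe e)"
    by (rule decomp_var[of f v]) blast
  have vanish: "msubst (fe e) (upd V T' A) = 0" if "e \<in> E" for e T'
    using split_step[OF E dec nv sub insert.prems(3) that, of T'] insert.hyps(2) by simp
  have IH: "fe e = 0" if "e \<in> E" for e
  proof (rule insert.IH)
    show "inK K (fe e)" using inKfe[OF K insert.prems(1)] .
    show "mvars (fe e) \<subseteq> V \<union> W" using sub[of e] nv[of e] insert.prems(2) by auto
    show "msubst (fe e) (upd V T' A) = 0" for T' using vanish[OF that] .
  qed
  then show ?case using dec by simp
qed

lemma shift_poly:
  assumes K: "subfield K" and g: "inK K g"
  shows "inK K (msubst g (\<lambda>i. mvar (\<phi> i)))"
    and "mvars (msubst g (\<lambda>i. mvar (\<phi> i))) \<subseteq> \<phi> ` mvars g"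
    and "msubst (msubst g (\<lambda>i. mvar (\<phi> i))) G = msubst g (\<lambda>i. G (\<phi> i))"
proof -
  show "inK K (msubst g (\<lambda>i. mvar (\<phi> i)))"
    by (rule inK_msubst[OF K g]) (simp add: inK_mvar K)
  show "mvars (msubst g (\<lambda>i. mvar (\<phi> i))) \<subseteq> \<phi> ` mvars g"
    using mvars_msubst[of g "\<lambda>i. mvar (\<phi> i)"] mvars_mvar by fastforce
  show "msubst (msubst g (\<lambda>i. mvar (\<phi> i))) G = msubst g (\<lambda>i. G (\<phi> i))"
    by (simp add: msubst_compose)
qed

lemma equiv_general:
  assumes K: "subfield K" and Ht: "\<forall>i<m. mvars (H i) \<subseteq> {..<n}" and sm: "s \<le> m"
    and ap: "\<forall>j<s. proj_image_apex K n m H (unit_vec j)"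
  shows "(\<forall>f\<in>poly_over K m. msubst f H = 0 \<longrightarrow> msubst f B = 0) \<longleftrightarrow>
         (\<forall>g\<in>poly_over K (m - s). msubst g (\<lambda>i. H (i + s)) = 0 \<longrightarrow> msubst g (\<lambda>i. B (i + s)) = 0)"
proof
  assume L: "\<forall>f\<in>poly_over K m. msubst f H = 0 \<longrightarrow> msubst f B = 0"
  show "\<forall>g\<in>poly_over K (m - s). msubst g (\<lambda>i. H (i + s)) = 0 \<longrightarrow> msubst g (\<lambda>i. B (i + s)) = 0"
  proof (intro ballI impI)
    fix g assume g: "g \<in> poly_over K (m - s)" and gz: "msubst g (\<lambda>i. H (i + s)) = 0"
    have gK: "inK K g" "mvars g \<subseteq> {..<m - s}" using g poly_over_iff[OF K] by auto
    let ?g = "msubst g (\<lambda>i. mvar (i + s))"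
    have "?g \<in> poly_over K m"
      unfolding poly_over_iff[OF K] using shift_poly(1,2)[OF K gK(1), of "\<lambda>i. i + s"] gK(2) by fastforce
    moreover have "msubst ?g H = 0" using gz shift_poly(3)[OF K gK(1)] by simp
    ultimately have "msubst ?g B = 0" using L by blast
    then show "msubst g (\<lambda>i. B (i + s)) = 0" using shift_poly(3)[OF K gK(1)] by simp
  qed
next
  assume R: "\<forall>g\<in>poly_over K (m - s). msubst g (\<lambda>i. H (i + s)) = 0 \<longrightarrow> msubst g (\<lambda>i. B (i + s)) = 0"
  show "\<forall>f\<in>poly_over K m. msubst f H = 0 \<longrightarrow> msubst f B = 0"
  proof (intro ballI impI)
    fix f assume f: "f \<in> poly_over K m" and fz: "msubst f H = 0"
    have fK: "inK K f" "mvars f \<subseteq> {..<m}" using f poly_over_iff[OF K] by auto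
    have Y: "msubst f (upd {..<s} T H) = 0" for T
      using rel_free[OF K Ht ap, of "{..<s}" f T] fK fz by auto
    have base: "msubst g B = 0" if g: "inK K g" "mvars g \<subseteq> {s..<m}" "msubst g H = 0" for g
    proof -
      let ?g = "msubst g (\<lambda>i. mvar (i - s))"
      have "?g \<in> poly_over K (m - s)"
        unfolding poly_over_iff[OF K] using shift_poly(1,2)[OF K g(1), of "\<lambda>i. i - s"] g(2) by fastforce
      moreover have "msubst ?g (\<lambda>i. H (i + s)) = msubst g H"
        unfolding shift_poly(3)[OF K g(1)] by (rule msubst_cong) (use g(2) in auto)
      moreover have "msubst ?g (\<lambda>i. B (i + s)) = msubst g B"
        unfolding shift_poly(3)[OF K g(1)] by (rule msubst_cong) (use g(2) in auto)
      ultimately show ?thesis using R g(3) by metis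
    qed
    have "msubst f (upd {..<s} B B) = 0"
      by (rule rel_transfer[OF K base, where V="{..<s}" and f=f and T=B]) (use fK Y sm in auto)
    moreover have "upd {..<s} B B = B" by (simp add: upd_def)
    ultimately show "msubst f B = 0" by simp
  qed
qed



lemma lin_dep_coords:
  fixes \<mu> :: "'d \<Rightarrow> 'b \<Rightarrow> 'a::field"
  assumes K: "subfield K" and B: "finite B"
  shows "finite \<Delta> \<Longrightarrow> card B < card \<Delta> \<Longrightarrow> (\<forall>\<delta>\<in>\<Delta>. \<forall>b\<in>B. \<mu> \<delta> b \<in> K) \<Longrightarrow>
    \<exists>\<kappa>. (\<forall>\<delta>\<in>\<Delta>. \<kappa> \<delta> \<in> K) \<and> (\<exists>\<delta>\<in>\<Delta>. \<kappa> \<delta> \<noteq> 0) \<and> (\<forall>b\<in>B. (\<Sum>\<delta>\<in>\<Delta>. \<kappa> \<delta> * \<mu> \<delta> b) = 0)"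
  using B
proof (induction B arbitrary: \<Delta> \<mu> rule: finite_induct)
  case empty
  then obtain \<delta> where "\<delta> \<in> \<Delta>" by (metis card.empty all_not_in_conv card_0_eq less_irrefl)
  then show ?case using subfield_1[OF K] by (intro exI[of _ "\<lambda>_. 1"]) auto
next
  case (insert b0 B)
  show ?case
  proof (cases "\<forall>\<delta>\<in>\<Delta>. \<mu> \<delta> b0 = 0")
    case True
    obtain \<kappa> where l: "\<forall>\<delta>\<in>\<Delta>. \<kappa> \<delta> \<in> K" "\<exists>\<delta>\<in>\<Delta>. \<kappa> \<delta> \<noteq> 0" "\<forall>b\<in>B. (\<Sum>\<delta>\<in>\<Delta>. \<kappa> \<delta> * \<mu> \<delta> b) = 0"
      using insert.IH[of \<Delta> \<mu>] insert.prems insert.hyps by auto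
    show ?thesis using l True by (intro exI[of _ \<kappa>]) auto
  next
    case False
    then obtain \<delta>0 where d0: "\<delta>0 \<in> \<Delta>" "\<mu> \<delta>0 b0 \<noteq> 0" by auto
    define \<Delta>' where "\<Delta>' = \<Delta> - {\<delta>0}"
    define \<mu>' where "\<mu>' \<delta> b = \<mu> \<delta> b - (\<mu> \<delta> b0 / \<mu> \<delta>0 b0) * \<mu> \<delta>0 b" for \<delta> b
    have fin: "finite \<Delta>'" using insert.prems by (simp add: \<Delta>'_def)
    have card: "card B < card \<Delta>'" using insert.prems insert.hyps d0 by (simp add: \<Delta>'_def)
    have inK': "\<forall>\<delta>\<in>\<Delta>'. \<forall>b\<in>B. \<mu>' \<delta> b \<in> K"
      using insert.prems(3) d0 unfolding \<mu>'_def \<Delta>'_def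
      by (auto intro!: subfield_diff[OF K] subfield_mult[OF K] subfield_divide[OF K])
    obtain \<kappa>' where l: "\<forall>\<delta>\<in>\<Delta>'. \<kappa>' \<delta> \<in> K" "\<exists>\<delta>\<in>\<Delta>'. \<kappa>' \<delta> \<noteq> 0"
        "\<forall>b\<in>B. (\<Sum>\<delta>\<in>\<Delta>'. \<kappa>' \<delta> * \<mu>' \<delta> b) = 0"
      using insert.IH[OF fin card inK'] by blast
    define S where "S = (\<Sum>\<delta>\<in>\<Delta>'. \<kappa>' \<delta> * \<mu> \<delta> b0)"
    define \<kappa> where "\<kappa> = \<kappa>'(\<delta>0 := - S / \<mu> \<delta>0 b0)"
    have sumsplit: "(\<Sum>\<delta>\<in>\<Delta>. \<kappa> \<delta> * \<mu> \<delta> b) = \<kappa> \<delta>0 * \<mu> \<delta>0 b + (\<Sum>\<delta>\<in>\<Delta>'. \<kappa>' \<delta> * \<mu> \<delta> b)" for b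
    proof -
      have "(\<Sum>\<delta>\<in>\<Delta>. \<kappa> \<delta> * \<mu> \<delta> b) = \<kappa> \<delta>0 * \<mu> \<delta>0 b + (\<Sum>\<delta>\<in>\<Delta>'. \<kappa> \<delta> * \<mu> \<delta> b)"
        using d0 insert.prems(1) unfolding \<Delta>'_def by (simp add: sum.remove)
      also have "(\<Sum>\<delta>\<in>\<Delta>'. \<kappa> \<delta> * \<mu> \<delta> b) = (\<Sum>\<delta>\<in>\<Delta>'. \<kappa>' \<delta> * \<mu> \<delta> b)"
        by (rule sum.cong) (auto simp: \<kappa>_def \<Delta>'_def)
      finally show ?thesis .
    qed
    have A: "\<forall>\<delta>\<in>\<Delta>. \<kappa> \<delta> \<in> K"
      using l(1) insert.prems(3) d0 unfolding \<kappa>_def \<Delta>'_def S_def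
      by (auto intro!: subfield_divide[OF K] subfield_uminus[OF K] subfield_sum[OF K] subfield_mult[OF K])
    have B: "\<exists>\<delta>\<in>\<Delta>. \<kappa> \<delta> \<noteq> 0"
      using l(2) by (auto simp: \<kappa>_def \<Delta>'_def)
    have C0: "(\<Sum>\<delta>\<in>\<Delta>. \<kappa> \<delta> * \<mu> \<delta> b0) = 0"
      unfolding sumsplit using d0(2) by (simp add: \<kappa>_def S_def[symmetric])
    have C: "(\<Sum>\<delta>\<in>\<Delta>. \<kappa> \<delta> * \<mu> \<delta> b) = 0" if b: "b \<in> B" for b
    proof -
      have X: "(\<Sum>\<delta>\<in>\<Delta>'. \<kappa>' \<delta> * (\<mu> \<delta> b0 / \<mu> \<delta>0 b0 * \<mu> \<delta>0 b)) = S / \<mu> \<delta>0 b0 * \<mu> \<delta>0 b"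
        unfolding S_def sum_divide_distrib sum_distrib_right by (rule sum.cong) simp_all
      have "0 = (\<Sum>\<delta>\<in>\<Delta>'. \<kappa>' \<delta> * \<mu>' \<delta> b)" using l(3) b by simp
      also have "\<dots> = (\<Sum>\<delta>\<in>\<Delta>'. \<kappa>' \<delta> * \<mu> \<delta> b) - (\<Sum>\<delta>\<in>\<Delta>'. \<kappa>' \<delta> * (\<mu> \<delta> b0 / \<mu> \<delta>0 b0 * \<mu> \<delta>0 b))"
        unfolding \<mu>'_def by (simp add: right_diff_distrib sum_subtractf)
      also have "\<dots> = (\<Sum>\<delta>\<in>\<Delta>'. \<kappa>' \<delta> * \<mu> \<delta> b) - S / \<mu> \<delta>0 b0 * \<mu> \<delta>0 b"
        by (simp only: X)
      also have "\<dots> = (\<Sum>\<delta>\<in>\<Delta>. \<kappa> \<delta> * \<mu> \<delta> b)"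
        unfolding sumsplit by (simp add: \<kappa>_def)
      finally show ?thesis by simp
    qed
    show ?thesis using A B C0 C by (intro exI[of _ \<kappa>]) auto
  qed
qed

definition kspan :: "'a::field set \<Rightarrow> 'a mpoly set \<Rightarrow> 'a mpoly set" where
  "kspan K S = {x. \<exists>\<mu>. (\<forall>b\<in>S. \<mu> b \<in> K) \<and> x = (\<Sum>b\<in>S. mconst (\<mu> b) * b)}"

lemma kspan_0: "subfield K \<Longrightarrow> 0 \<in> kspan K S"
  unfolding kspan_def by (intro CollectI exI[of _ "\<lambda>_. 0"]) (simp add: subfield_0)

lemma kspan_add: "subfield K \<Longrightarrow> x \<in> kspan K S \<Longrightarrow> y \<in> kspan K S \<Longrightarrow> x + y \<in> kspan K S"
  unfolding kspan_def
proof (clarify)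
  fix \<mu> \<nu> assume K: "subfield K" and m: "\<forall>b\<in>S. \<mu> b \<in> K" and n: "\<forall>b\<in>S. \<nu> b \<in> K"
  show "\<exists>\<rho>. (\<forall>b\<in>S. \<rho> b \<in> K) \<and> (\<Sum>b\<in>S. mconst (\<mu> b) * b) + (\<Sum>b\<in>S. mconst (\<nu> b) * b) = (\<Sum>b\<in>S. mconst (\<rho> b) * b)"
    using m n K by (intro exI[of _ "\<lambda>b. \<mu> b + \<nu> b"]) (simp add: subfield_add mconst_add distrib_right sum.distrib)
qed

lemma kspan_scale: "subfield K \<Longrightarrow> c \<in> K \<Longrightarrow> x \<in> kspan K S \<Longrightarrow> mconst c * x \<in> kspan K S"
  unfolding kspan_def
proof (clarify)
  fix \<mu> assume K: "subfield K" and c: "c \<in> K" and m: "\<forall>b\<in>S. \<mu> b \<in> K"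
  show "\<exists>\<rho>. (\<forall>b\<in>S. \<rho> b \<in> K) \<and> mconst c * (\<Sum>b\<in>S. mconst (\<mu> b) * b) = (\<Sum>b\<in>S. mconst (\<rho> b) * b)"
    using m K c by (intro exI[of _ "\<lambda>b. c * \<mu> b"]) (simp add: subfield_mult mconst_mult sum_distrib_left mult_ac)
qed

lemma kspan_sum: "subfield K \<Longrightarrow> (\<And>a. a \<in> A \<Longrightarrow> f a \<in> kspan K S) \<Longrightarrow> sum f A \<in> kspan K S"
  by (induction A rule: infinite_finite_induct) (auto simp: kspan_0 kspan_add)

lemma kspan_base: "subfield K \<Longrightarrow> finite S \<Longrightarrow> b \<in> S \<Longrightarrow> b \<in> kspan K S"
proof -
  assume K: "subfield K" and S: "finite S" and b: "b \<in> S"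
  have "(\<Sum>x\<in>S. mconst (if x = b then 1 else 0) * x) = (\<Sum>x\<in>S. if x = b then x else 0)"
    by (rule sum.cong) auto
  also have "\<dots> = b" using S b by (simp add: sum.delta)
  finally show ?thesis unfolding kspan_def
    by (intro CollectI exI[of _ "\<lambda>x. if x = b then 1 else 0"]) (simp add: subfield_0[OF K] subfield_1[OF K])
qed

lemma kspan_mono: "subfield K \<Longrightarrow> finite S' \<Longrightarrow> S \<subseteq> S' \<Longrightarrow> kspan K S \<subseteq> kspan K S'"
proof
  fix x assume K: "subfield K" and S': "finite S'" and sub: "S \<subseteq> S'" and x: "x \<in> kspan K S"
  then obtain \<mu> where m: "\<forall>b\<in>S. \<mu> b \<in> K" and xe: "x = (\<Sum>b\<in>S. mconst (\<mu> b) * b)"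
    by (auto simp: kspan_def)
  have "x = (\<Sum>b\<in>S. mconst (\<mu> b) * b)" by (fact xe)
  also have "\<dots> \<in> kspan K S'"
    by (intro kspan_sum K kspan_scale) (use m sub S' K in \<open>auto intro: kspan_base\<close>)
  finally show "x \<in> kspan K S'" .
qed

lemma kspan_mult_into:
  assumes K: "subfield K" and S': "finite S'" and h: "\<And>b. b \<in> S \<Longrightarrow> q * b \<in> kspan K S'"
    and x: "x \<in> kspan K S"
  shows "q * x \<in> kspan K S'"
proof -
  obtain \<mu> where m: "\<forall>b\<in>S. \<mu> b \<in> K" and xe: "x = (\<Sum>b\<in>S. mconst (\<mu> b) * b)"
    using x by (auto simp: kspan_def)
  have "q * x = (\<Sum>b\<in>S. mconst (\<mu> b) * (q * b))"
    by (simp add: xe sum_distrib_left mult_ac)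
  also have "\<dots> \<in> kspan K S'"
    by (intro kspan_sum K kspan_scale) (use m h in auto)
  finally show ?thesis .
qed

lemma lin_dep_span:
  fixes x :: "'d \<Rightarrow> 'a::field mpoly"
  assumes K: "subfield K" and B: "finite B" and D: "finite \<Delta>" and card: "card B < card \<Delta>"
    and x: "\<And>\<delta>. \<delta> \<in> \<Delta> \<Longrightarrow> x \<delta> \<in> kspan K B"
  shows "\<exists>\<kappa>. (\<forall>\<delta>\<in>\<Delta>. \<kappa> \<delta> \<in> K) \<and> (\<exists>\<delta>\<in>\<Delta>. \<kappa> \<delta> \<noteq> 0) \<and> (\<Sum>\<delta>\<in>\<Delta>. mconst (\<kappa> \<delta>) * x \<delta>) = 0"
proof -
  have "\<forall>\<delta>\<in>\<Delta>. \<exists>\<mu>. (\<forall>b\<in>B. \<mu> b \<in> K) \<and> x \<delta> = (\<Sum>b\<in>B. mconst (\<mu> b) * b)"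
    using x by (auto simp: kspan_def)
  then obtain M where M: "\<And>\<delta>. \<delta> \<in> \<Delta> \<Longrightarrow> (\<forall>b\<in>B. M \<delta> b \<in> K) \<and> x \<delta> = (\<Sum>b\<in>B. mconst (M \<delta> b) * b)"
    by metis
  obtain \<kappa> where l: "\<forall>\<delta>\<in>\<Delta>. \<kappa> \<delta> \<in> K" "\<exists>\<delta>\<in>\<Delta>. \<kappa> \<delta> \<noteq> 0" "\<forall>b\<in>B. (\<Sum>\<delta>\<in>\<Delta>. \<kappa> \<delta> * M \<delta> b) = 0"
    using lin_dep_coords[OF K B D card, of M] M by blast
  have "(\<Sum>\<delta>\<in>\<Delta>. mconst (\<kappa> \<delta>) * x \<delta>) = (\<Sum>\<delta>\<in>\<Delta>. \<Sum>b\<in>B. mconst (\<kappa> \<delta> * M \<delta> b) * b)"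
    by (rule sum.cong[OF refl]) (simp add: M sum_distrib_left mconst_mult mult_ac)
  also have "\<dots> = (\<Sum>b\<in>B. mconst (\<Sum>\<delta>\<in>\<Delta>. \<kappa> \<delta> * M \<delta> b) * b)"
    by (subst sum.swap) (simp add: mconst_sum sum_distrib_right)
  also have "\<dots> = 0" using l(3) by simp
  finally show ?thesis using l(1,2) by blast
qed



definition RJ :: "'a::field set \<Rightarrow> (nat \<Rightarrow> 'a mpoly) \<Rightarrow> nat set \<Rightarrow> 'a mpoly set" where
  "RJ K g J = {msubst p g | p. inK K p \<and> mvars p \<subseteq> J}"

lemma RJ_mult: "subfield K \<Longrightarrow> x \<in> RJ K g J \<Longrightarrow> y \<in> RJ K g J \<Longrightarrow> x * y \<in> RJ K g J"
  unfolding RJ_def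
proof (clarify)
  fix p q assume K: "subfield K" and p: "inK K p" "mvars p \<subseteq> J" and q: "inK K q" "mvars q \<subseteq> J"
  show "\<exists>pa. msubst p g * msubst q g = msubst pa g \<and> inK K pa \<and> mvars pa \<subseteq> J"
    using p q K mvars_mult[of p q] by (intro exI[of _ "p * q"]) (auto simp: msubst_mult inK_mult)
qed

lemma RJ_1: "subfield K \<Longrightarrow> 1 \<in> RJ K g J"
  unfolding RJ_def using inK_1[of K] by (intro CollectI exI[of _ 1]) auto

lemma RJ_prod: "subfield K \<Longrightarrow> (\<And>i. i \<in> A \<Longrightarrow> f i \<in> RJ K g J) \<Longrightarrow> prod f A \<in> RJ K g J"
  by (induction A rule: infinite_finite_induct) (auto simp: RJ_1 RJ_mult)

lemma ex_uniform_bound: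
  fixes P :: "'i \<Rightarrow> nat \<Rightarrow> bool"
  assumes "finite I" and "\<And>i. i \<in> I \<Longrightarrow> \<exists>a. P i a" and "\<And>i a b. P i a \<Longrightarrow> a \<le> b \<Longrightarrow> P i b"
  shows "\<exists>a. \<forall>i\<in>I. P i a"
  using assms(1,2)
proof (induction I rule: finite_induct)
  case empty then show ?case by simp
next
  case (insert x I)
  then obtain a where a: "\<forall>i\<in>I. P i a" by auto
  obtain b where b: "P x b" using insert.prems by auto
  show ?case using a b assms(3) by (intro exI[of _ "max a b"]) (auto intro: max.cobounded1 max.cobounded2)
qed

lemma choose_D:
  fixes M r P k :: nat
  assumes "r < k" "1 \<le> P"
  shows "(M * ((M+1)^r * P) + 1)^r * P < ((M+1)^r * P + 1)^k"
proof -
  define D where "D = (M+1)^r * P"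
  have "M * D + 1 \<le> (M+1) * (D+1)" by (simp add: algebra_simps)
  then have "(M * D + 1)^r * P \<le> ((M+1) * (D+1))^r * P" by (simp add: power_mono)
  also have "\<dots> = D * (D+1)^r" unfolding power_mult_distrib D_def by (simp only: mult_ac)
  also have "\<dots> < (D+1) * (D+1)^r" by simp
  also have "\<dots> = (D+1)^(Suc r)" by simp
  also have "\<dots> \<le> (D+1)^k" using assms(1) by (intro power_increasing) auto
  finally show ?thesis by (simp add: D_def)
qed

context
  fixes K :: "'a::field set" and g :: "nat \<Rightarrow> 'a mpoly" and N :: nat and J :: "nat set"
    and e :: "nat \<Rightarrow> nat" and c :: "nat \<Rightarrow> 'a mpoly" and r :: "nat \<Rightarrow> nat \<Rightarrow> 'a mpoly"
  assumes K: "subfield K" and JN: "J \<subseteq> {..<N}"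
    and e_pos: "\<And>j. j < N \<Longrightarrow> j \<notin> J \<Longrightarrow> 1 \<le> e j"
    and c_RJ: "\<And>j. j < N \<Longrightarrow> j \<notin> J \<Longrightarrow> c j \<in> RJ K g J"
    and c_nz: "\<And>j. j < N \<Longrightarrow> j \<notin> J \<Longrightarrow> c j \<noteq> 0"
    and r_RJ: "\<And>j l. j < N \<Longrightarrow> j \<notin> J \<Longrightarrow> l < e j \<Longrightarrow> r j l \<in> RJ K g J"
    and rel: "\<And>j. j < N \<Longrightarrow> j \<notin> J \<Longrightarrow> c j * g j ^ e j = (\<Sum>l<e j. g j ^ l * r j l)"
begin

definition Gam :: "nat \<Rightarrow> (nat \<Rightarrow> nat) set" where
  "Gam X = PiE {..<N} (\<lambda>i. if i \<in> J then {..X} else {..<e i})"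

definition gmono :: "(nat \<Rightarrow> nat) \<Rightarrow> 'a mpoly" where
  "gmono \<gamma> = (\<Prod>i<N. g i ^ \<gamma> i)"

definition Wsp :: "nat \<Rightarrow> 'a mpoly set" where
  "Wsp X = kspan K (gmono ` Gam X)"

definition mulb :: "'a mpoly \<Rightarrow> nat \<Rightarrow> bool" where
  "mulb p a \<longleftrightarrow> (\<forall>X. \<forall>w\<in>Wsp X. p * w \<in> Wsp (X + a))"

lemma fin_Gam: "finite (Gam X)"
  by (simp add: Gam_def finite_PiE)

lemma Gam_mono: "X \<le> Y \<Longrightarrow> Gam X \<subseteq> Gam Y"
  unfolding Gam_def by (rule PiE_mono) auto

lemma W_mono: "X \<le> Y \<Longrightarrow> Wsp X \<subseteq> Wsp Y"
  unfolding Wsp_def by (rule kspan_mono[OF K]) (simp_all add: fin_Gam image_mono Gam_mono)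

lemma mono_in_W: "\<gamma> \<in> Gam X \<Longrightarrow> gmono \<gamma> \<in> Wsp X"
  unfolding Wsp_def by (rule kspan_base[OF K]) (auto simp: fin_Gam)

lemma one_W: "1 \<in> Wsp 0"
proof -
  let ?\<gamma> = "restrict (\<lambda>_. 0::nat) {..<N}"
  have "0 < e i" if "i < N" "i \<notin> J" for i using e_pos[OF that] by simp
  then have "?\<gamma> \<in> Gam 0" by (auto simp: Gam_def PiE_iff)
  moreover have "gmono ?\<gamma> = 1" by (simp add: gmono_def)
  ultimately show ?thesis using mono_in_W by metis
qed

definition Rest :: "(nat \<Rightarrow> nat) \<Rightarrow> nat \<Rightarrow> 'a mpoly" where
  "Rest \<gamma> j = (\<Prod>i\<in>{..<N}-{j}. g i ^ \<gamma> i)"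

lemma mono_split: "j < N \<Longrightarrow> gmono \<gamma> = g j ^ \<gamma> j * Rest \<gamma> j"
  unfolding gmono_def Rest_def by (subst prod.remove[of _ j]) auto

lemma Rest_upd: "Rest (\<gamma>(j := a)) j = Rest \<gamma> j"
  unfolding Rest_def by (rule prod.cong) auto

lemma mono_upd: "j < N \<Longrightarrow> gmono (\<gamma>(j := a)) = g j ^ a * Rest \<gamma> j"
  using mono_split[of j "\<gamma>(j := a)"] Rest_upd by simp

lemma Gam_upd:
  assumes "\<gamma> \<in> Gam X" "j < N" "a \<in> (if j \<in> J then {..Y} else {..<e j})" "X \<le> Y"
  shows "\<gamma>(j := a) \<in> Gam Y"
proof -
  have g: "\<gamma> i \<in> (if i \<in> J then {..X} else {..<e i})" if "i < N" for i
    using PiE_mem[OF assms(1)[unfolded Gam_def], of i] that by simp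
  have "(\<gamma>(j := a)) i \<in> (if i \<in> J then {..Y} else {..<e i})" if "i < N" for i
  proof (cases "i = j")
    case True then show ?thesis using assms(3) by (auto split: if_splits)
  next
    case False then show ?thesis using g[OF that] assms(4) by (auto split: if_splits)
  qed
  moreover have "\<gamma>(j := a) \<in> extensional {..<N}"
    using assms(1,2) by (auto simp: Gam_def PiE_iff extensional_def)
  ultimately show ?thesis by (auto simp: Gam_def PiE_iff)
qed

lemma Gam_le: "\<gamma> \<in> Gam X \<Longrightarrow> j < N \<Longrightarrow> j \<notin> J \<Longrightarrow> \<gamma> j < e j"
  using PiE_mem[of \<gamma> "{..<N}" "\<lambda>i. if i \<in> J then {..X} else {..<e i}" j] by (simp add: Gam_def)

lemma Gam_leJ: "\<gamma> \<in> Gam X \<Longrightarrow> j \<in> J \<Longrightarrow> \<gamma> j \<le> X"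
  using PiE_mem[of \<gamma> "{..<N}" "\<lambda>i. if i \<in> J then {..X} else {..<e i}" j] JN by (auto simp: Gam_def)

lemma mulb_mono: "mulb p a \<Longrightarrow> a \<le> b \<Longrightarrow> mulb p b"
  unfolding mulb_def
proof (intro allI ballI)
  fix X w assume h: "\<forall>X. \<forall>w\<in>Wsp X. p * w \<in> Wsp (X + a)" and ab: "a \<le> b" and w: "w \<in> Wsp X"
  have "p * w \<in> Wsp (X + a)" using h w by blast
  then show "p * w \<in> Wsp (X + b)" using W_mono[of "X + a" "X + b"] ab by auto
qed

lemma mulb_const: "\<kappa> \<in> K \<Longrightarrow> mulb (mconst \<kappa>) 0"
  unfolding mulb_def Wsp_def using kspan_scale[OF K] by auto

lemma mulb_1: "mulb 1 0"
  using mulb_const[OF subfield_1[OF K]] by simp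

lemma mulb_add: "mulb p a \<Longrightarrow> mulb q a \<Longrightarrow> mulb (p + q) a"
  unfolding mulb_def Wsp_def by (auto simp: distrib_right intro!: kspan_add[OF K])

lemma mulb_mult: "mulb p a \<Longrightarrow> mulb q b \<Longrightarrow> mulb (p * q) (a + b)"
  unfolding mulb_def
proof (intro allI ballI)
  fix X w assume hp: "\<forall>X. \<forall>w\<in>Wsp X. p * w \<in> Wsp (X + a)" and hq: "\<forall>X. \<forall>w\<in>Wsp X. q * w \<in> Wsp (X + b)"
    and w: "w \<in> Wsp X"
  have "q * w \<in> Wsp (X + b)" using hq w by blast
  then have "p * (q * w) \<in> Wsp (X + b + a)" using hp by blast
  then show "p * q * w \<in> Wsp (X + (a + b))" by (simp add: mult.assoc add_ac)
qed

lemma mulb_power: "mulb p a \<Longrightarrow> mulb (p ^ d) (a * d)"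
proof (induction d)
  case 0 then show ?case using mulb_1 by simp
next
  case (Suc d)
  then have "mulb (p * p ^ d) (a + a * d)" using mulb_mult by blast
  then show ?case by simp
qed

lemma mulb_prod: "(\<And>i. i \<in> F \<Longrightarrow> mulb (f i) (a i)) \<Longrightarrow> mulb (prod f F) (sum a F)"
proof (induction F rule: infinite_finite_induct)
  case (infinite A) then show ?case using mulb_1 by simp
next
  case empty then show ?case using mulb_1 by simp
next
  case (insert x F) then show ?case by (simp add: mulb_mult)
qed

lemma mulb_zero: "mulb 0 a"
  using mulb_mono[of "mconst 0" 0 a] mulb_const[OF subfield_0[OF K]] by simp

lemma mulb_sum: "(\<And>i. i \<in> F \<Longrightarrow> mulb (f i) a) \<Longrightarrow> mulb (sum f F) a"
proof (induction F rule: infinite_finite_induct)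
  case (infinite A) then show ?case using mulb_zero by simp
next
  case empty then show ?case using mulb_zero by simp
next
  case (insert x F) then show ?case by (simp add: mulb_add)
qed

lemma mulb_varJ: "j \<in> J \<Longrightarrow> mulb (g j) 1"
  unfolding mulb_def
proof (intro allI ballI)
  fix X w assume j: "j \<in> J" and w: "w \<in> Wsp X"
  have jN: "j < N" using j JN by auto
  have fin: "finite (gmono ` Gam (X + 1))" by (simp add: fin_Gam)
  have "g j * b \<in> kspan K (gmono ` Gam (X + 1))" if "b \<in> gmono ` Gam X" for b
  proof -
    from that obtain \<gamma> where \<gamma>: "\<gamma> \<in> Gam X" "b = gmono \<gamma>" by auto
    have "g j * b = gmono (\<gamma>(j := \<gamma> j + 1))"
      using \<gamma> jN by (simp add: mono_split[of j \<gamma>] mono_upd)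
    moreover have "\<gamma>(j := \<gamma> j + 1) \<in> Gam (X + 1)"
      using Gam_upd[OF \<gamma>(1) jN] Gam_leJ[OF \<gamma>(1) j] j by auto
    ultimately show "g j * b \<in> kspan K (gmono ` Gam (X + 1))" using mono_in_W by (simp add: Wsp_def)
  qed
  then show "g j * w \<in> Wsp (X + 1)"
    using kspan_mult_into[OF K fin] w unfolding Wsp_def by blast
qed

lemma RJ_mulb: "x \<in> RJ K g J \<Longrightarrow> \<exists>a. mulb x a"
proof -
  assume "x \<in> RJ K g J"
  then obtain p where p: "inK K p" "mvars p \<subseteq> J" "x = msubst p g" by (auto simp: RJ_def)
  have "\<exists>a. mulb (msubst p g) a"
    using K p(1,2)
  proof (induction p rule: poly_induct)
    case (const c) then show ?case using mulb_const by auto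
  next
    case (var i) then show ?case using mulb_varJ by auto
  next
    case (add p q)
    then obtain a b where "mulb (msubst p g) a" "mulb (msubst q g) b" by auto
    then show ?case
      by (intro exI[of _ "max a b"]) (auto simp: msubst_add intro!: mulb_add elim: mulb_mono)
  next
    case (mult p q)
    then obtain a b where "mulb (msubst p g) a" "mulb (msubst q g) b" by auto
    then show ?case by (intro exI[of _ "a + b"]) (simp add: msubst_mult mulb_mult)
  qed
  then show ?thesis using p(3) by simp
qed

definition Cc :: "'a mpoly" where
  "Cc = (\<Prod>j\<in>{..<N}-J. c j)"

lemma C_RJ: "Cc \<in> RJ K g J"
  unfolding Cc_def by (rule RJ_prod[OF K]) (auto intro: c_RJ)

lemma C_nz: "Cc \<noteq> 0"
  unfolding Cc_def using c_nz by (auto simp: prod_zero_iff)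

lemma notJ_bound:
  assumes jN: "j < N" and jJ: "j \<notin> J"
  shows "\<exists>a. \<forall>X. \<forall>w\<in>Wsp X. Cc * g j * w \<in> Wsp (X + a)"
proof -
  define Cc' where "Cc' = (\<Prod>i\<in>{..<N}-J-{j}. c i)"
  have CC': "Cc = c j * Cc'"
    unfolding Cc_def Cc'_def using jN jJ by (subst prod.remove[of _ j]) auto
  have "Cc' \<in> RJ K g J" unfolding Cc'_def by (rule RJ_prod[OF K]) (auto intro: c_RJ)
  then obtain a1 where a1: "mulb Cc' a1" using RJ_mulb by blast
  obtain a0 where a0: "mulb Cc a0" using RJ_mulb[OF C_RJ] by blast
  obtain a2 where a2: "\<forall>l\<in>{..<e j}. mulb (r j l) a2"
    using ex_uniform_bound[of "{..<e j}" "\<lambda>l a. mulb (r j l) a"] RJ_mulb r_RJ[OF jN jJ] mulb_mono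
    by blast
  show ?thesis
  proof (intro exI[of _ "a0 + a1 + a2"] allI ballI)
    fix X w assume w: "w \<in> Wsp X"
    have fin: "finite (gmono ` Gam (X + (a0 + a1 + a2)))" by (simp add: fin_Gam)
    have "Cc * g j * b \<in> Wsp (X + (a0 + a1 + a2))" if "b \<in> gmono ` Gam X" for b
    proof -
      from that obtain \<gamma> where \<gamma>: "\<gamma> \<in> Gam X" "b = gmono \<gamma>" by auto
      have lt: "\<gamma> j < e j" using Gam_le[OF \<gamma>(1) jN jJ] .
      show "Cc * g j * b \<in> Wsp (X + (a0 + a1 + a2))"
      proof (cases "\<gamma> j + 1 < e j")
        case True
        have "g j * b = gmono (\<gamma>(j := \<gamma> j + 1))"
          using \<gamma> jN by (simp add: mono_split[of j \<gamma>] mono_upd)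
        moreover have "\<gamma>(j := \<gamma> j + 1) \<in> Gam X"
          using Gam_upd[OF \<gamma>(1) jN, of "\<gamma> j + 1" X] True jJ by auto
        ultimately have "g j * b \<in> Wsp X" using mono_in_W by simp
        then have "Cc * (g j * b) \<in> Wsp (X + a0)" using a0 unfolding mulb_def by blast
        then show ?thesis using W_mono[of "X + a0" "X + (a0 + a1 + a2)"] by (auto simp: mult.assoc)
      next
        case False
        then have ej: "e j = \<gamma> j + 1" using lt by simp
        have "Cc * g j * b = Cc' * (c j * g j ^ e j) * Rest \<gamma> j"
          using \<gamma> jN by (simp add: mono_split[of j \<gamma>] CC' ej mult_ac)
        also have "\<dots> = Cc' * (\<Sum>l<e j. r j l * gmono (\<gamma>(j := l)))"
          by (simp add: rel[OF jN jJ] mono_upd[OF jN] sum_distrib_left sum_distrib_right mult_ac)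
        finally have eq: "Cc * g j * b = Cc' * (\<Sum>l<e j. r j l * gmono (\<gamma>(j := l)))" .
        have "r j l * gmono (\<gamma>(j := l)) \<in> Wsp (X + a2)" if l: "l < e j" for l
        proof -
          have "\<gamma>(j := l) \<in> Gam X" using Gam_upd[OF \<gamma>(1) jN, of l X] l jJ by auto
          then show ?thesis using a2 l mono_in_W unfolding mulb_def by auto
        qed
        then have "(\<Sum>l<e j. r j l * gmono (\<gamma>(j := l))) \<in> Wsp (X + a2)"
          unfolding Wsp_def by (intro kspan_sum[OF K]) auto
        then have "Cc' * (\<Sum>l<e j. r j l * gmono (\<gamma>(j := l))) \<in> Wsp (X + a2 + a1)"
          using a1 unfolding mulb_def by blast
        then show ?thesis unfolding eq using W_mono[of "X + a2 + a1" "X + (a0 + a1 + a2)"] by auto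
      qed
    qed
    then show "Cc * g j * w \<in> Wsp (X + (a0 + a1 + a2))"
      using kspan_mult_into[OF K fin] w unfolding Wsp_def by blast
  qed
qed

lemma global_bound: "\<exists>A. mulb Cc A \<and> (\<forall>j<N. mulb (Cc * g j) A)"
proof -
  obtain a0 where a0: "mulb Cc a0" using RJ_mulb[OF C_RJ] by blast
  have "\<exists>a. mulb (Cc * g j) a" if "j \<in> {..<N}" for j
  proof (cases "j \<in> J")
    case True
    then show ?thesis using mulb_mult[OF a0 mulb_varJ[OF True]] by blast
  next
    case False
    then show ?thesis using notJ_bound[of j] that unfolding mulb_def by (auto simp: mult.assoc)
  qed
  then obtain a where a: "\<forall>j\<in>{..<N}. mulb (Cc * g j) a"
    using ex_uniform_bound[of "{..<N}" "\<lambda>j a. mulb (Cc * g j) a"] mulb_mono by blast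
  have "mulb (Cc * g j) (max a a0)" if "j < N" for j
    using a that mulb_mono[of "Cc * g j" a "max a a0"] by simp
  moreover have "mulb Cc (max a a0)" using a0 mulb_mono[of Cc a0 "max a a0"] by simp
  ultimately show ?thesis by blast
qed


lemma mulb_shift: "mulb (Cc ^ E * x) (A * E) \<Longrightarrow> mulb Cc A \<Longrightarrow> E \<le> E' \<Longrightarrow> mulb (Cc ^ E' * x) (A * E')"
proof -
  assume h: "mulb (Cc ^ E * x) (A * E)" and A: "mulb Cc A" and le: "E \<le> E'"
  have "mulb (Cc ^ (E' - E) * (Cc ^ E * x)) (A * (E' - E) + A * E)"
    by (rule mulb_mult[OF mulb_power[OF A] h])
  moreover have "Cc ^ (E' - E) * (Cc ^ E * x) = Cc ^ E' * x"
    using le by (simp add: mult.assoc[symmetric] power_add[symmetric])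
  moreover have "A * (E' - E) + A * E = A * E'"
    using le by (simp add: diff_mult_distrib2)
  ultimately show ?thesis by simp
qed

lemma poly_bound:
  assumes A: "mulb Cc A" "\<And>j. j < N \<Longrightarrow> mulb (Cc * g j) A"
    and p: "inK K p" "mvars p \<subseteq> {..<N}"
  shows "\<exists>E. mulb (Cc ^ E * msubst p g) (A * E)"
  using K p
proof (induction p rule: poly_induct)
  case (const c) then show ?case using mulb_const by (intro exI[of _ 0]) simp
next
  case (var i) then show ?case using A(2)[of i] by (intro exI[of _ 1]) simp
next
  case (add p q)
  then obtain E1 E2 where e1: "mulb (Cc ^ E1 * msubst p g) (A * E1)" and e2: "mulb (Cc ^ E2 * msubst q g) (A * E2)"
    by auto
  have "mulb (Cc ^ max E1 E2 * msubst p g) (A * max E1 E2)" by (rule mulb_shift[OF e1 A(1)]) simp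
  moreover have "mulb (Cc ^ max E1 E2 * msubst q g) (A * max E1 E2)" by (rule mulb_shift[OF e2 A(1)]) simp
  ultimately show ?case
    by (intro exI[of _ "max E1 E2"]) (simp add: msubst_add distrib_left mulb_add)
next
  case (mult p q)
  then obtain E1 E2 where e1: "mulb (Cc ^ E1 * msubst p g) (A * E1)" and e2: "mulb (Cc ^ E2 * msubst q g) (A * E2)"
    by auto
  have "mulb ((Cc ^ E1 * msubst p g) * (Cc ^ E2 * msubst q g)) (A * E1 + A * E2)"
    by (rule mulb_mult[OF e1 e2])
  then show ?case
    by (intro exI[of _ "E1 + E2"]) (simp add: msubst_mult power_add mult_ac distrib_left)
qed

definition mk :: "nat \<Rightarrow> (nat \<Rightarrow> nat) \<Rightarrow> (nat \<Rightarrow>\<^sub>0 nat)" where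
  "mk k \<delta> = (\<Sum>i<k. Poly_Mapping.single i (\<delta> i))"

lemma lookup_mk: "Poly_Mapping.lookup (mk k \<delta>) i = (if i < k then \<delta> i else 0)"
  by (simp add: mk_def lookup_sum lookup_single when_def)

lemma keys_mk: "Poly_Mapping.keys (mk k \<delta>) \<subseteq> {..<k}"
  by (auto simp: in_keys_iff lookup_mk split: if_splits)

lemma counting:
  assumes kJ: "card J < k" and u: "\<forall>i<k. u i \<in> gen_alg K N g"
  shows "\<not> alg_indep K k u"
proof
  assume indep: "alg_indep K k u"
  obtain A where A: "mulb Cc A" "\<forall>j<N. mulb (Cc * g j) A" using global_bound by blast
  have "\<forall>i<k. \<exists>p. inK K p \<and> mvars p \<subseteq> {..<N} \<and> u i = msubst p g"
    using u unfolding gen_alg_def poly_over_iff[OF K] by blast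
  then have "\<exists>E. mulb (Cc ^ E * u i) (A * E)" if "i \<in> {..<k}" for i
    using poly_bound[OF A(1)] A(2) that by fastforce
  then obtain E where E: "\<forall>i\<in>{..<k}. mulb (Cc ^ E * u i) (A * E)"
    using ex_uniform_bound[of "{..<k}" "\<lambda>i E. mulb (Cc ^ E * u i) (A * E)"] mulb_shift[OF _ A(1)]
    by blast
  define M where "M = A * E * k"
  define P where "P = (\<Prod>i\<in>{..<N}-J. e i)"
  define D where "D = (M + 1) ^ card J * P"
  define X where "X = M * D"
  define \<Delta> where "\<Delta> = PiE {..<k} (\<lambda>_. {..D})"
  define U where "U \<delta> = (\<Prod>i<k. u i ^ \<delta> i)" for \<delta>
  define x where "x \<delta> = Cc ^ (E * k * D) * U \<delta>" for \<delta>
  have xW: "x \<delta> \<in> Wsp X" if d: "\<delta> \<in> \<Delta>" for \<delta>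
  proof -
    define t where "t = (\<Sum>i<k. \<delta> i)"
    have t: "t \<le> k * D"
    proof -
      have "t \<le> (\<Sum>i<k. D)" unfolding t_def by (rule sum_mono) (use d in \<open>auto simp: \<Delta>_def PiE_iff\<close>)
      then show ?thesis by simp
    qed
    have m1: "mulb (\<Prod>i<k. (Cc ^ E * u i) ^ \<delta> i) (\<Sum>i<k. A * E * \<delta> i)"
      by (rule mulb_prod) (use E mulb_power in auto)
    have eq1: "(\<Prod>i<k. (Cc ^ E * u i) ^ \<delta> i) = Cc ^ (E * t) * U \<delta>"
      by (simp add: U_def t_def power_mult_distrib prod.distrib power_mult[symmetric]
          power_sum sum_distrib_left)
    have m2: "mulb (Cc ^ (E * (k * D - t))) (A * (E * (k * D - t)))"
      by (rule mulb_power[OF A(1)])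
    have "mulb (Cc ^ (E * (k * D - t)) * (Cc ^ (E * t) * U \<delta>)) (A * (E * (k * D - t)) + (\<Sum>i<k. A * E * \<delta> i))"
      using mulb_mult[OF m2 m1[unfolded eq1]] .
    moreover have "Cc ^ (E * (k * D - t)) * (Cc ^ (E * t) * U \<delta>) = x \<delta>"
      using t by (simp add: x_def mult.assoc[symmetric] power_add[symmetric] diff_mult_distrib2[symmetric]
          add_mult_distrib2[symmetric])
    moreover have "A * (E * (k * D - t)) + (\<Sum>i<k. A * E * \<delta> i) = X"
    proof -
      have "(\<Sum>i<k. A * E * \<delta> i) = A * E * t" by (simp add: t_def sum_distrib_left)
      moreover have "A * (E * (k * D - t)) + A * E * t = A * E * ((k * D - t) + t)"
        by (simp only: add_mult_distrib2 mult.assoc)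
      moreover have "(k * D - t) + t = k * D" using t by simp
      ultimately show ?thesis by (simp add: X_def M_def mult_ac)
    qed
    ultimately have "mulb (x \<delta>) X" by simp
    then show ?thesis using one_W unfolding mulb_def by fastforce
  qed
  have P1: "1 \<le> P" unfolding P_def by (rule prod_ge_1) (use e_pos in auto)
  have cardGam: "card (Gam X) = (X + 1) ^ card J * P"
  proof -
    have "card (Gam X) = (\<Prod>i<N. card (if i \<in> J then {..X} else {..<e i}))"
      by (simp add: Gam_def card_PiE)
    also have "\<dots> = (\<Prod>i<N. if i \<in> J then X + 1 else e i)"
      by (rule prod.cong) auto
    also have "\<dots> = (\<Prod>i\<in>{..<N}-J. if i \<in> J then X + 1 else e i) * (\<Prod>i\<in>J. if i \<in> J then X + 1 else e i)"
      by (rule prod.subset_diff[OF JN]) simp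
    also have "\<dots> = P * (X + 1) ^ card J"
      unfolding P_def by (simp add: prod.cong[of J J "\<lambda>i. if i \<in> J then X + 1 else e i" "\<lambda>_. X + 1"])
    finally show ?thesis by simp
  qed
  have cardD: "card \<Delta> = (D + 1) ^ k"
    by (simp add: \<Delta>_def card_PiE)
  have "card (gmono ` Gam X) < card \<Delta>"
  proof -
    have "card (gmono ` Gam X) \<le> card (Gam X)" by (rule card_image_le[OF fin_Gam])
    also have "\<dots> < card \<Delta>"
      unfolding cardGam cardD unfolding X_def D_def using choose_D[OF kJ P1, of M] by simp
    finally show ?thesis .
  qed
  moreover have xk: "\<And>\<delta>. \<delta> \<in> \<Delta> \<Longrightarrow> x \<delta> \<in> kspan K (gmono ` Gam X)"
    using xW unfolding Wsp_def by blast
  moreover have "finite \<Delta>" by (simp add: \<Delta>_def finite_PiE)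
  moreover have "finite (gmono ` Gam X)" by (simp add: fin_Gam)
  ultimately obtain \<kappa> where kap: "\<forall>\<delta>\<in>\<Delta>. \<kappa> \<delta> \<in> K" "\<exists>\<delta>\<in>\<Delta>. \<kappa> \<delta> \<noteq> 0"
      "(\<Sum>\<delta>\<in>\<Delta>. mconst (\<kappa> \<delta>) * x \<delta>) = 0"
    using lin_dep_span[OF K, of "gmono ` Gam X" \<Delta> x] by blast
  have "(\<Sum>\<delta>\<in>\<Delta>. mconst (\<kappa> \<delta>) * x \<delta>) = Cc ^ (E * k * D) * (\<Sum>\<delta>\<in>\<Delta>. mconst (\<kappa> \<delta>) * U \<delta>)"
    unfolding sum_distrib_left by (rule sum.cong) (simp_all add: x_def mult.left_commute)
  then have "Cc ^ (E * k * D) * (\<Sum>\<delta>\<in>\<Delta>. mconst (\<kappa> \<delta>) * U \<delta>) = 0"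
    using kap(3) by simp
  then have sum0: "(\<Sum>\<delta>\<in>\<Delta>. mconst (\<kappa> \<delta>) * U \<delta>) = 0" using C_nz by simp
  define f where "f = (\<Sum>\<delta>\<in>\<Delta>. Poly_Mapping.single (mk k \<delta>) (\<kappa> \<delta>))"
  have "f \<in> poly_over K k"
  proof -
    have "inK K f" unfolding f_def by (intro inK_sum[OF K] inK_single[OF K]) (use kap(1) in auto)
    moreover have "mvars f \<subseteq> {..<k}"
      unfolding f_def using mvars_sum mvars_single keys_mk by fastforce
    ultimately show ?thesis using poly_over_iff[OF K] by blast
  qed
  moreover have "msubst f u = 0"
  proof -
    have "mprod (mk k \<delta>) u = U \<delta>" for \<delta>
      by (subst mprod_superset[of "{..<k}"]) (auto simp: keys_mk lookup_mk U_def)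
    then show ?thesis unfolding f_def using sum0 by (simp add: msubst_sum msubst_single)
  qed
  moreover have "f \<noteq> 0"
  proof -
    obtain \<delta>0 where d0: "\<delta>0 \<in> \<Delta>" "\<kappa> \<delta>0 \<noteq> 0" using kap(2) by blast
    have inj: "mk k \<delta> = mk k \<delta>0 \<longleftrightarrow> \<delta> = \<delta>0" if "\<delta> \<in> \<Delta>" for \<delta>
    proof
      assume h: "mk k \<delta> = mk k \<delta>0"
      have "\<delta> i = \<delta>0 i" if "i \<in> {..<k}" for i
        using arg_cong[OF h, of "\<lambda>m. Poly_Mapping.lookup m i"] that by (simp add: lookup_mk)
      then show "\<delta> = \<delta>0" using PiE_ext \<open>\<delta> \<in> \<Delta>\<close> d0(1) unfolding \<Delta>_def by metis
    qed simp
    have "Poly_Mapping.lookup f (mk k \<delta>0) = (\<Sum>\<delta>\<in>\<Delta>. if \<delta> = \<delta>0 then \<kappa> \<delta> else 0)"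
      unfolding f_def lookup_sum by (rule sum.cong) (auto simp: lookup_single when_def inj)
    also have "\<dots> = \<kappa> \<delta>0" using d0(1) by (simp add: \<Delta>_def finite_PiE)
    finally show ?thesis using d0(2) by auto
  qed
  ultimately show False using indep unfolding alg_indep_def by blast
qed

end



lemma const_poly: "mvars f = {} \<Longrightarrow> f = mconst (Poly_Mapping.lookup f 0)"
proof -
  assume h: "mvars f = {}"
  have keys: "Poly_Mapping.keys f \<subseteq> {0}"
  proof
    fix \<mu> assume "\<mu> \<in> Poly_Mapping.keys f"
    then have "Poly_Mapping.keys \<mu> = {}" using h by (auto simp: mvars_def)
    then show "\<mu> \<in> {0}" by simp
  qed
  show ?thesis
  proof (rule poly_mapping_eqI)
    fix \<mu> show "Poly_Mapping.lookup f \<mu> = Poly_Mapping.lookup (mconst (Poly_Mapping.lookup f 0)) \<mu>"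
      using keys by (cases "\<mu> = 0") (auto simp: mconst_def lookup_single in_keys_iff when_def)
  qed
qed

lemma msubst_const: "mvars f = {} \<Longrightarrow> msubst f G = f"
  by (metis const_poly msubst_mconst)

lemma gen_alg_intro: "subfield K \<Longrightarrow> inK K p \<Longrightarrow> mvars p \<subseteq> {..<N} \<Longrightarrow> msubst p g \<in> gen_alg K N g"
  unfolding gen_alg_def using poly_over_iff by blast

definition Sset :: "'a::field set \<Rightarrow> nat \<Rightarrow> (nat \<Rightarrow> 'a mpoly) \<Rightarrow> nat set" where
  "Sset K N g = {k. \<exists>u. (\<forall>i<k. u i \<in> gen_alg K N g) \<and> alg_indep K k u}"

lemma trdeg_Sset: "trdeg K N g = Max (Sset K N g)"
  by (simp add: trdeg_def Sset_def)

lemma Sset_bound: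
  assumes K: "subfield K" and k: "k \<in> Sset K N g"
  shows "k \<le> N"
proof (rule ccontr)
  assume kN: "\<not> k \<le> N"
  obtain u where u: "\<forall>i<k. u i \<in> gen_alg K N g" "alg_indep K k u"
    using k by (auto simp: Sset_def)
  have "\<not> alg_indep K k u"
    by (rule counting[where K=K and g=g and N=N and J="{..<N}" and e="\<lambda>_. 1" and c="\<lambda>_. 1" and r="\<lambda>_ _. 0"])
       (use K u kN in auto)
  then show False using u by blast
qed

lemma Sset_finite: "subfield K \<Longrightarrow> finite (Sset K N g)"
  using Sset_bound by (meson finite_atMost finite_subset subsetI atMost_iff)

lemma Sset_0: "subfield K \<Longrightarrow> 0 \<in> Sset K N g"
  unfolding Sset_def alg_indep_def
  by (auto simp: poly_over_iff msubst_const)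

lemma trdeg_part:
  assumes K: "subfield K" and Ht: "\<forall>i<m. mvars (H i) \<subseteq> {..<n}" and sm: "s \<le> m"
    and ap: "\<forall>j<s. proj_image_apex K n m H (unit_vec j)"
  shows "trdeg K m H = trdeg K (m - s) (\<lambda>i. H (i + s)) + s"
proof -
  let ?H' = "\<lambda>i. H (i + s)"
  define S where "S = Sset K m H"
  define S' where "S' = Sset K (m - s) ?H'"
  have finS: "finite S" and finS': "finite S'" using Sset_finite[OF K] by (auto simp: S_def S'_def)
  have S'ne: "S' \<noteq> {}" using Sset_0[OF K] by (auto simp: S'_def)
  define d where "d = Max S'"
  have dS': "d \<in> S'" using Max_in[OF finS' S'ne] by (simp add: d_def)
  have low: "s + d \<in> S"
  proof -
    obtain u where u: "\<forall>i<d. u i \<in> gen_alg K (m - s) ?H'" "alg_indep K d u"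
      using dS' by (auto simp: S'_def Sset_def)
    have "\<forall>i<d. \<exists>p. inK K p \<and> mvars p \<subseteq> {..<m - s} \<and> u i = msubst p ?H'"
      using u(1) unfolding gen_alg_def poly_over_iff[OF K] by blast
    then have "\<exists>P. \<forall>i<d. inK K (P i) \<and> mvars (P i) \<subseteq> {..<m - s} \<and> u i = msubst (P i) ?H'"
      by (rule choice_iff'[THEN iffD1])
    then obtain P where Pall: "\<forall>i<d. inK K (P i) \<and> mvars (P i) \<subseteq> {..<m - s} \<and> u i = msubst (P i) ?H'"
      by blast
    have P: "inK K (P i) \<and> mvars (P i) \<subseteq> {..<m - s} \<and> u i = msubst (P i) ?H'" if "i < d" for i
      using Pall that by blast
    define Pu where "Pu i = msubst (P i) (\<lambda>l. mvar (l + s))" for i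
    have Pu_K: "inK K (Pu i)" if "i < d" for i
      unfolding Pu_def by (rule shift_poly(1)[OF K]) (use P[OF that] in blast)
    have Pu_v: "mvars (Pu i) \<subseteq> {s..<m}" if "i < d" for i
    proof -
      have "mvars (Pu i) \<subseteq> (\<lambda>l. l + s) ` mvars (P i)"
        unfolding Pu_def by (rule shift_poly(2)[OF K]) (use P[OF that] in blast)
      note im = this
      show ?thesis
      proof
        fix x assume "x \<in> mvars (Pu i)"
        then obtain l where l: "l \<in> mvars (P i)" "x = l + s" using im by blast
        then show "x \<in> {s..<m}" using P[OF that] by auto
      qed
    qed
    have Pu_s: "msubst (Pu i) G = msubst (P i) (\<lambda>l. G (l + s))" for i G
      unfolding Pu_def by (simp add: msubst_compose)
    define w where "w i = (if i < s then H i else u (i - s))" for i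
    define Q where "Q i = (if i < s then mvar i else Pu (i - s))" for i
    have w_gen: "w i \<in> gen_alg K m H" if "i < s + d" for i
    proof (cases "i < s")
      case True
      then have "w i = msubst (mvar i) H" by (simp add: w_def)
      moreover have "mvars (mvar i :: 'a mpoly) \<subseteq> {..<m}" using mvars_mvar[of i] True sm by auto
      ultimately show ?thesis using gen_alg_intro[OF K inK_mvar[OF K], of i m H] by simp
    next
      case False
      have im: "i - s < d" using that False by simp
      have "w i = msubst (Pu (i - s)) H" using P[OF im] False by (simp add: w_def Pu_s)
      moreover have "mvars (Pu (i - s)) \<subseteq> {..<m}" using Pu_v[OF im] by auto
      ultimately show ?thesis using gen_alg_intro[OF K Pu_K[OF im]] by simp
    qed
    have indep: "alg_indep K (s + d) w"
      unfolding alg_indep_def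
    proof (intro ballI impI)
      fix f assume f: "f \<in> poly_over K (s + d)" and fw: "msubst f w = 0"
      have fK: "inK K f" "mvars f \<subseteq> {..<s + d}" using f poly_over_iff[OF K] by auto
      define F where "F = msubst f Q"
      have FK: "inK K F" unfolding F_def
        by (rule inK_msubst[OF K fK(1)]) (use fK(2) Pu_K inK_mvar[OF K] in \<open>auto simp: Q_def\<close>)
      have FV: "mvars F \<subseteq> {..<m}"
      proof -
        have "mvars (Q i) \<subseteq> {..<m}" if "i \<in> mvars f" for i
        proof (cases "i < s")
          case True then show ?thesis using mvars_mvar[of i] sm by (auto simp: Q_def)
        next
          case False
          have "i - s < d" using that fK(2) False by auto
          then have "mvars (Pu (i - s)) \<subseteq> {s..<m}" by (rule Pu_v)
          then show ?thesis using False by (auto simp: Q_def)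
        qed
        then show ?thesis unfolding F_def using mvars_msubst[of f Q] by blast
      qed
      have QT: "msubst (Q i) (upd {..<s} T H) = upd {..<s} T w i" if "i \<in> mvars f" for i T
      proof (cases "i < s")
        case True then show ?thesis by (simp add: Q_def upd_def w_def)
      next
        case False
        have "msubst (Q i) (upd {..<s} T H) = msubst (P (i - s)) (\<lambda>l. upd {..<s} T H (l + s))"
          using False by (simp add: Q_def Pu_s)
        also have "\<dots> = msubst (P (i - s)) ?H'" by (simp add: upd_def)
        also have "\<dots> = u (i - s)" using P[of "i - s"] False that fK(2) by auto
        finally show ?thesis using False by (simp add: upd_def w_def)
      qed
      have FH: "msubst F H = 0"
      proof -
        have "msubst F H = msubst f (\<lambda>i. msubst (Q i) H)" by (simp add: F_def msubst_compose)
        also have "\<dots> = msubst f w"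
        proof (rule msubst_cong)
          fix i assume i: "i \<in> mvars f"
          show "msubst (Q i) H = w i"
          proof (cases "i < s")
            case True then show ?thesis by (simp add: Q_def w_def)
          next
            case False
            have "msubst (Q i) H = msubst (P (i - s)) ?H'" using False by (simp add: Q_def Pu_s)
            also have "\<dots> = u (i - s)" using P[of "i - s"] False i fK(2) by auto
            finally show ?thesis using False by (simp add: w_def)
          qed
        qed
        finally show ?thesis using fw by simp
      qed
      have vanish: "msubst f (upd {..<s} T w) = 0" for T
      proof -
        have "msubst F (upd {..<s} T H) = 0"
          using rel_free[OF K Ht ap, of "{..<s}" F T] FK FV FH by auto
        moreover have "msubst F (upd {..<s} T H) = msubst f (upd {..<s} T w)"
          unfolding F_def msubst_compose by (rule msubst_cong) (rule QT)
        ultimately show ?thesis by simp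
      qed
      have base: "g = 0" if g: "inK K g" "mvars g \<subseteq> {s..<s + d}" "msubst g w = 0" for g
      proof -
        let ?g = "msubst g (\<lambda>i. mvar (i - s))"
        have "?g \<in> poly_over K d"
          unfolding poly_over_iff[OF K] using shift_poly(1,2)[OF K g(1), of "\<lambda>i. i - s"] g(2) by fastforce
        moreover have "msubst ?g u = msubst g w"
          unfolding shift_poly(3)[OF K g(1)] by (rule msubst_cong) (use g(2) in \<open>auto simp: w_def\<close>)
        ultimately have g0: "?g = 0" using u(2) g(3) unfolding alg_indep_def by auto
        have "g = msubst g (\<lambda>i. mvar (i - s + s))"
          by (subst msubst_mvar_id[symmetric], rule msubst_cong) (use g(2) in auto)
        also have "\<dots> = msubst ?g (\<lambda>i. mvar (i + s))"
          by (simp add: msubst_compose)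
        finally show ?thesis using g0 by simp
      qed
      show "f = 0"
        by (rule indep_extend[OF K base, where V="{..<s}" and f=f]) (use fK vanish in auto)
    qed
    show ?thesis unfolding S_def Sset_def using w_gen indep by blast
  qed
  have ge: "s + d \<le> Max S" using Max_ge[OF finS low] .
  define indepJ where "indepJ J \<longleftrightarrow> (\<forall>f. inK K f \<longrightarrow> mvars f \<subseteq> J \<longrightarrow> msubst f H = 0 \<longrightarrow> f = 0)" for J
  define Fam where "Fam = {J. {..<s} \<subseteq> J \<and> J \<subseteq> {..<m} \<and> indepJ J}"
  have s_in: "{..<s} \<in> Fam"
  proof -
    have "indepJ {..<s}"
      unfolding indepJ_def
    proof (intro allI impI)
      fix f assume f: "inK K f" "mvars f \<subseteq> {..<s}" "msubst f H = 0"
      have fm: "mvars f \<subseteq> {..<m}" using f(2) sm by auto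
      have base: "g = 0" if "inK K g" "mvars g \<subseteq> {}" "msubst g H = 0" for g
        using that msubst_const[of g H] by simp
      show "f = 0"
        by (rule indep_extend[OF K base, where V="{..<s}" and f=f])
           (use f fm rel_free[OF K Ht ap, of "{..<s}" f] in auto)
    qed
    then show ?thesis using sm by (auto simp: Fam_def)
  qed
  have finFam: "finite Fam" by (rule finite_subset[of _ "Pow {..<m}"]) (auto simp: Fam_def)
  obtain J0 where J0: "J0 \<in> Fam" and maxc: "\<And>J. J \<in> Fam \<Longrightarrow> card J \<le> card J0"
  proof -
    have "Max (card ` Fam) \<in> card ` Fam" using finFam s_in by (intro Max_in) auto
    then obtain J0 where "J0 \<in> Fam" "card J0 = Max (card ` Fam)" by auto
    moreover have "card J \<le> Max (card ` Fam)" if "J \<in> Fam" for J using finFam that by simp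
    ultimately show ?thesis using that by metis
  qed
  have J0s: "{..<s} \<subseteq> J0" and J0m: "J0 \<subseteq> {..<m}" and J0i: "indepJ J0" using J0 by (auto simp: Fam_def)
  have finJ0: "finite J0" using J0m finite_subset by blast
  have notindep: "\<exists>f. inK K f \<and> mvars f \<subseteq> insert j J0 \<and> msubst f H = 0 \<and> f \<noteq> 0"
    if j: "j < m" "j \<notin> J0" for j
  proof -
    have "card (insert j J0) > card J0" using j finJ0 by simp
    then have "insert j J0 \<notin> Fam" using maxc by fastforce
    then have "\<not> indepJ (insert j J0)" using J0s J0m j by (auto simp: Fam_def)
    then show ?thesis unfolding indepJ_def by blast
  qed
  have rel_data: "\<exists>x. 1 \<le> fst x \<and> fst (snd x) \<in> RJ K H J0 \<and> fst (snd x) \<noteq> 0 \<and>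
      (\<forall>l<fst x. snd (snd x) l \<in> RJ K H J0) \<and>
      fst (snd x) * H j ^ fst x = (\<Sum>l<fst x. H j ^ l * snd (snd x) l)"
    if j: "j \<in> {..<m} - J0" for j
  proof -
    obtain f where f: "inK K f" "mvars f \<subseteq> insert j J0" "msubst f H = 0" "f \<noteq> 0"
      using notindep j by blast
    obtain E fe where E: "finite E" and dec: "f = (\<Sum>e\<in>E. mvar j ^ e * fe e)"
      and nv: "\<And>e. j \<notin> mvars (fe e)" and sub: "\<And>e. mvars (fe e) \<subseteq> mvars f"
      and inKfe: "\<And>K e. subfield K \<Longrightarrow> inK K f \<Longrightarrow> inK K (fe e)"
      by (rule decomp_var[of f j]) blast
    have feK: "inK K (fe e)" for e using inKfe[OF K f(1)] .
    have feJ: "mvars (fe e) \<subseteq> J0" for e using sub[of e] nv[of e] f(2) by auto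
    define E' where "E' = {e\<in>E. fe e \<noteq> 0}"
    have finE': "finite E'" using E by (simp add: E'_def)
    have E'ne: "E' \<noteq> {}"
    proof
      assume "E' = {}"
      then have "f = 0" using dec by (auto simp: E'_def)
      then show False using f(4) by simp
    qed
    define t where "t = Max E'"
    have tE': "t \<in> E'" using Max_in[OF finE' E'ne] by (simp add: t_def)
    define cj where "cj = msubst (fe t) H"
    define rj where "rj l = (if l \<in> E' then - msubst (fe l) H else 0)" for l
    have cj_nz: "cj \<noteq> 0"
      using J0i feK feJ tE' unfolding indepJ_def cj_def E'_def by blast
    have cj_RJ: "cj \<in> RJ K H J0" unfolding cj_def RJ_def using feK feJ by blast
    have rj_RJ: "rj l \<in> RJ K H J0" for l
    proof (cases "l \<in> E'")
      case True
      then have "rj l = msubst (- fe l) H" by (simp add: rj_def msubst_minus)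
      then show ?thesis unfolding RJ_def using inK_uminus[OF K feK] feJ[of l] by (auto intro!: exI[of _ "- fe l"])
    next
      case False
      then have "rj l = msubst 0 H" by (simp add: rj_def)
      then show ?thesis unfolding RJ_def using inK_0[OF K] by fastforce
    qed
    have "0 = (\<Sum>e\<in>E. H j ^ e * msubst (fe e) H)" using f(3) msubst_decomp[OF dec, of H] by simp
    also have "\<dots> = (\<Sum>e\<in>E'. H j ^ e * msubst (fe e) H)"
      by (rule sum.mono_neutral_right[OF E]) (auto simp: E'_def)
    also have "\<dots> = H j ^ t * cj + (\<Sum>e\<in>E'-{t}. H j ^ e * msubst (fe e) H)"
      using tE' finE' by (simp add: sum.remove cj_def)
    finally have eq0: "H j ^ t * cj + (\<Sum>e\<in>E'-{t}. H j ^ e * msubst (fe e) H) = 0" by simp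
    have sub_t: "E' - {t} \<subseteq> {..<t}"
      using finE' by (auto simp: t_def) (metis Max_ge finE' le_neq_implies_less)
    have "(\<Sum>l<t. H j ^ l * rj l) = (\<Sum>l\<in>E'-{t}. H j ^ l * rj l)"
      by (rule sum.mono_neutral_right) (use sub_t in \<open>auto simp: rj_def\<close>)
    also have "\<dots> = - (\<Sum>l\<in>E'-{t}. H j ^ l * msubst (fe l) H)"
      by (simp add: rj_def sum_negf[symmetric])
    finally have A: "(\<Sum>l<t. H j ^ l * rj l) = - (\<Sum>l\<in>E'-{t}. H j ^ l * msubst (fe l) H)" .
    have rel: "cj * H j ^ t = (\<Sum>l<t. H j ^ l * rj l)"
      unfolding A mult.commute[of cj "H j ^ t"] using eq0 by (simp add: eq_neg_iff_add_eq_0)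
    have t1: "1 \<le> t"
    proof (rule ccontr)
      assume "\<not> 1 \<le> t"
      then have "t = 0" by simp
      then show False using rel cj_nz by simp
    qed
    show ?thesis using t1 cj_RJ cj_nz rj_RJ rel by (intro exI[of _ "(t, cj, rj)"]) auto
  qed
  define R where "R j x \<longleftrightarrow> 1 \<le> fst x \<and> fst (snd x) \<in> RJ K H J0 \<and> fst (snd x) \<noteq> 0 \<and>
      (\<forall>l<fst x. snd (snd x) l \<in> RJ K H J0) \<and>
      fst (snd x) * H j ^ fst x = (\<Sum>l<fst x. H j ^ l * snd (snd x) l)" for j x
  have "\<forall>j\<in>{..<m} - J0. \<exists>x. R j x" unfolding R_def using rel_data by blast
  from bchoice[OF this] obtain X where XR: "\<forall>j\<in>{..<m} - J0. R j (X j)" by blast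
  have X: "1 \<le> fst (X j) \<and> fst (snd (X j)) \<in> RJ K H J0 \<and> fst (snd (X j)) \<noteq> 0 \<and>
      (\<forall>l<fst (X j). snd (snd (X j)) l \<in> RJ K H J0) \<and>
      fst (snd (X j)) * H j ^ fst (X j) = (\<Sum>l<fst (X j). H j ^ l * snd (snd (X j)) l)"
    if "j < m" "j \<notin> J0" for j
    using XR that unfolding R_def by blast
  have cnt: "k \<le> card J0" if kS: "k \<in> S" for k
  proof (rule ccontr)
    assume "\<not> k \<le> card J0"
    then have kJ: "card J0 < k" by simp
    obtain u where u: "\<forall>i<k. u i \<in> gen_alg K m H" "alg_indep K k u"
      using kS by (auto simp: S_def Sset_def)
    have "\<not> alg_indep K k u"
      by (rule counting[where K=K and g=H and N=m and J=J0 and e="\<lambda>j. fst (X j)"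
            and c="\<lambda>j. fst (snd (X j))" and r="\<lambda>j. snd (snd (X j))"])
         (use K J0m X kJ u in auto)
    then show False using u by blast
  qed
  have maxS: "Max S \<le> card J0" using cnt Max_in[OF finS] low by fastforce
  define J1 where "J1 = J0 \<inter> {s..<m}"
  have J0split: "J0 = {..<s} \<union> J1" using J0s J0m by (auto simp: J1_def)
  have cardJ0: "card J0 = s + card J1"
    unfolding J0split by (subst card_Un_disjoint) (auto simp: J1_def finJ0)
  have J1S': "card J1 \<in> S'"
  proof -
    have finJ1: "finite J1" using finJ0 by (simp add: J1_def)
    obtain \<phi> where \<phi>: "bij_betw \<phi> {0..<card J1} J1" using ex_bij_betw_nat_finite[OF finJ1] by blast
    define r where "r = card J1"
    have \<phi>r: "bij_betw \<phi> {..<r} J1" using \<phi> by (simp add: r_def atLeast0LessThan)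
    have \<phi>J: "\<phi> i \<in> J1" if "i < r" for i using \<phi>r that by (auto simp: bij_betw_def)
    define u where "u i = H (\<phi> i)" for i
    have ugen: "u i \<in> gen_alg K (m - s) ?H'" if "i < r" for i
    proof -
      have "u i = msubst (mvar (\<phi> i - s)) ?H'" using \<phi>J[OF that] by (simp add: u_def J1_def)
      moreover have "mvars (mvar (\<phi> i - s)) \<subseteq> {..<m - s}"
        using mvars_mvar[of "\<phi> i - s"] \<phi>J[OF that] by (auto simp: J1_def)
      ultimately show ?thesis using gen_alg_intro[OF K inK_mvar[OF K]] by metis
    qed
    have uind: "alg_indep K r u"
      unfolding alg_indep_def
    proof (intro ballI impI)
      fix f assume f: "f \<in> poly_over K r" and fu: "msubst f u = 0"
      have fK: "inK K f" "mvars f \<subseteq> {..<r}" using f poly_over_iff[OF K] by auto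
      define F where "F = msubst f (\<lambda>i. mvar (\<phi> i))"
      have "inK K F" unfolding F_def using shift_poly(1)[OF K fK(1)] .
      moreover have "mvars F \<subseteq> J0"
        using shift_poly(2)[OF K fK(1), of \<phi>] fK(2) \<phi>J by (fastforce simp: F_def J1_def)
      moreover have "msubst F H = 0"
      proof -
        have "u = (\<lambda>i. H (\<phi> i))" by (simp add: u_def fun_eq_iff)
        then show ?thesis unfolding F_def shift_poly(3)[OF K fK(1)] using fu by simp
      qed
      ultimately have F0: "F = 0" using J0i unfolding indepJ_def by blast
      define \<psi> where "\<psi> = the_inv_into {..<r} \<phi>"
      have inj: "inj_on \<phi> {..<r}" using \<phi>r by (simp add: bij_betw_def)
      have "f = msubst f (\<lambda>i. mvar (\<psi> (\<phi> i)))"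
        by (subst msubst_mvar_id[symmetric], rule msubst_cong)
           (use fK(2) inj in \<open>auto simp: \<psi>_def the_inv_into_f_f\<close>)
      also have "\<dots> = msubst F (\<lambda>j. mvar (\<psi> j))"
        by (simp add: F_def msubst_compose)
      finally show "f = 0" using F0 by simp
    qed
    show ?thesis unfolding S'_def Sset_def r_def[symmetric] using ugen uind by blast
  qed
  have "card J1 \<le> d" using Max_ge[OF finS' J1S'] by (simp add: d_def)
  then have "Max S = s + d" using maxS cardJ0 ge by simp
  then show ?thesis by (simp add: trdeg_Sset S_def S'_def d_def)
qed

theorem proposition3p8:
  fixes K :: "'a::field set" and n m s :: nat and H :: "nat \<Rightarrow> 'a mpoly"
  assumes "subfield K"
    and "poly_tuple n m H"
    and "s \<le> m"
    and "\<forall>j<s. proj_image_apex K n m H (unit_vec j)"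
  shows "(\<forall>a. image_apex K n m H a \<longleftrightarrow> image_apex K n (m - s) (\<lambda>i. H (i + s)) (\<lambda>i. a (i + s)))
    \<and> (\<forall>p. (\<exists>i. s \<le> i \<and> i < m \<and> p i \<noteq> 0) \<longrightarrow>
          (proj_image_apex K n m H p \<longleftrightarrow>
           proj_image_apex K n (m - s) (\<lambda>i. H (i + s)) (\<lambda>i. p (i + s))))
    \<and> trdeg K m H = trdeg K (m - s) (\<lambda>i. H (i + s)) + s"
proof (intro conjI allI impI)
  have K: "subfield K" by (fact assms(1))
  have Ht: "\<forall>i<m. mvars (H i) \<subseteq> {..<n}" using assms(2) by (simp add: poly_tuple_def)
  note EG = equiv_general[OF K Ht assms(3) assms(4)]
  fix a :: "nat \<Rightarrow> 'a"
  show "image_apex K n m H a \<longleftrightarrow> image_apex K n (m - s) (\<lambda>i. H (i + s)) (\<lambda>i. a (i + s))"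
    unfolding image_apex_def by (rule EG)
next
  have K: "subfield K" by (fact assms(1))
  have Ht: "\<forall>i<m. mvars (H i) \<subseteq> {..<n}" using assms(2) by (simp add: poly_tuple_def)
  note EG = equiv_general[OF K Ht assms(3) assms(4)]
  fix p :: "nat \<Rightarrow> 'a" assume p: "\<exists>i. s \<le> i \<and> i < m \<and> p i \<noteq> 0"
  have e1: "\<exists>i<m. p i \<noteq> 0" using p by auto
  have e2: "\<exists>i<m - s. p (i + s) \<noteq> 0"
  proof -
    obtain i where "s \<le> i" "i < m" "p i \<noteq> 0" using p by auto
    then show ?thesis by (intro exI[of _ "i - s"]) auto
  qed
  show "proj_image_apex K n m H p \<longleftrightarrow> proj_image_apex K n (m - s) (\<lambda>i. H (i + s)) (\<lambda>i. p (i + s))"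
    unfolding proj_image_apex_def using e1 e2 EG[of "\<lambda>i. H i + mvar n * mconst (p i)"] by simp
next
  have K: "subfield K" by (fact assms(1))
  have Ht: "\<forall>i<m. mvars (H i) \<subseteq> {..<n}" using assms(2) by (simp add: poly_tuple_def)
  show "trdeg K m H = trdeg K (m - s) (\<lambda>i. H (i + s)) + s"
    by (rule trdeg_part[OF K Ht assms(3) assms(4)])
qed


end
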